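(* Let $k$ be sufficiently large, $r=2^k\ln 2-\frac{1+\ln 2}{2}-\epsilon_k$ with $\epsilon_k=\Theta_k(2^{-k/3})$, $M=\lceil rN\rceil$. With probability $1-o(1)$ as $N\to\infty$, every satisfying assignment of the pruned formula $\Phi'$ (on the variables $V'$) extends to a satisfying assignment of $\Phi=\Phi_k(N,M)$.
   Context: $\Phi=\Phi_k(N,M)$ is the random $k$-CNF on $V=\{x_1,\dots,x_N\}$ with $M$ clauses, each literal chosen independently and uniformly from $\{x_1,\neg x_1,\dots,x_N,\neg x_N\}$; $D_l$ denotes the number of occurrences of literal $l$. Pruning: PR1: let $U$ be the set of variables $x$ with $\max\{|D_x-kr/2|,|D_{\neg x}-kr/2|\}>k^32^{k/2}$. PR2: while there is a clause at least three of whose literals have underlying variable in $U$, remove all such clauses and add to $U$ every variable $x$ such that in the reduced formula the degree of $x$ or $\neg x$ differs from $kr/2$ by more than $k^32^{k/2}$. PR3: delete literals of variables in $U$ from all remaining clauses. The result is $\Phi'$, a CNF on $V'=V\setminus U$. *)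

theory Defs
  imports "HOL-Probability.Probability" "HOL-Library.Landau_Symbols"
begin

text \<open>Literals: a pair (x, s) with variable index x < N; (x, True) is x, (x, False) is its negation.
  A k-CNF with M clauses is a map from positions (i, j), i < M (clause), j < k (slot), to literals.\<close>

type_synonym lit = "nat \<times> bool"
type_synonym cnf = "nat \<times> nat \<Rightarrow> lit"

definition lits :: "nat \<Rightarrow> lit set" where
  "lits N = {..<N} \<times> UNIV"

definition formulas :: "nat \<Rightarrow> nat \<Rightarrow> nat \<Rightarrow> cnf set" where
  "formulas k N M = PiE ({..<M} \<times> {..<k}) (\<lambda>_. lits N)"

definition random_formula :: "nat \<Rightarrow> nat \<Rightarrow> nat \<Rightarrow> cnf pmf" where
  "random_formula k N M = pmf_of_set (formulas k N M)"

definition lit_true :: "(nat \<Rightarrow> bool) \<Rightarrow> lit \<Rightarrow> bool" where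
  "lit_true \<sigma> l = (\<sigma> (fst l) = snd l)"

definition satisfies :: "nat \<Rightarrow> nat \<Rightarrow> cnf \<Rightarrow> (nat \<Rightarrow> bool) \<Rightarrow> bool" where
  "satisfies k M \<Phi> \<sigma> = (\<forall>i<M. \<exists>j<k. lit_true \<sigma> (\<Phi> (i, j)))"

definition degree :: "nat \<Rightarrow> cnf \<Rightarrow> nat set \<Rightarrow> lit \<Rightarrow> nat" where
  "degree k \<Phi> C l = card {(i, j). i \<in> C \<and> j < k \<and> \<Phi> (i, j) = l}"

definition deviating :: "nat \<Rightarrow> real \<Rightarrow> nat \<Rightarrow> cnf \<Rightarrow> nat set \<Rightarrow> nat set" where
  "deviating k r N \<Phi> C = {x. x < N \<and>
     max \<bar>real (degree k \<Phi> C (x, True)) - real k * r / 2\<bar>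
         \<bar>real (degree k \<Phi> C (x, False)) - real k * r / 2\<bar>
       > real k ^ 3 * 2 powr (real k / 2)}"

definition hits :: "nat \<Rightarrow> cnf \<Rightarrow> nat set \<Rightarrow> nat \<Rightarrow> nat" where
  "hits k \<Phi> U i = card {j. j < k \<and> fst (\<Phi> (i, j)) \<in> U}"

definition pr2_step :: "nat \<Rightarrow> real \<Rightarrow> nat \<Rightarrow> cnf \<Rightarrow> nat set \<times> nat set \<Rightarrow> nat set \<times> nat set" where
  "pr2_step k r N \<Phi> st =
     (let C = fst st; U = snd st in
      if \<exists>i\<in>C. hits k \<Phi> U i \<ge> 3 then
        (let C' = {i\<in>C. hits k \<Phi> U i < 3} in (C', U \<union> deviating k r N \<Phi> C'))
      else st)"

text \<open>PR1 followed by PR2. Each non-trivial round removes at least one clause, so after M rounds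
  the loop has terminated.\<close>
definition pruned :: "nat \<Rightarrow> real \<Rightarrow> nat \<Rightarrow> nat \<Rightarrow> cnf \<Rightarrow> nat set \<times> nat set" where
  "pruned k r N M \<Phi> =
     (pr2_step k r N \<Phi> ^^ M) ({..<M}, deviating k r N \<Phi> {..<M})"

text \<open>PR3: the pruned formula Phi' consists of the remaining clauses with all literals of variables
  in U deleted; it lives on V' = {x<N} - U.\<close>
definition satisfies_pruned :: "nat \<Rightarrow> real \<Rightarrow> nat \<Rightarrow> nat \<Rightarrow> cnf \<Rightarrow> (nat \<Rightarrow> bool) \<Rightarrow> bool" where
  "satisfies_pruned k r N M \<Phi> \<tau> =
     (let C = fst (pruned k r N M \<Phi>); U = snd (pruned k r N M \<Phi>) in
      \<forall>i\<in>C. \<exists>j<k. fst (\<Phi> (i, j)) \<notin> U \<and> lit_true \<tau> (\<Phi> (i, j)))"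

definition reduced_vars :: "nat \<Rightarrow> real \<Rightarrow> nat \<Rightarrow> nat \<Rightarrow> cnf \<Rightarrow> nat set" where
  "reduced_vars k r N M \<Phi> = {..<N} - snd (pruned k r N M \<Phi>)"

definition extension_property :: "nat \<Rightarrow> real \<Rightarrow> nat \<Rightarrow> nat \<Rightarrow> cnf \<Rightarrow> bool" where
  "extension_property k r N M \<Phi> =
     (\<forall>\<tau>. satisfies_pruned k r N M \<Phi> \<tau> \<longrightarrow>
        (\<exists>\<sigma>. satisfies k M \<Phi> \<sigma> \<and> (\<forall>x\<in>reduced_vars k r N M \<Phi>. \<sigma> x = \<tau> x)))"

definition clause_density :: "(nat \<Rightarrow> real) \<Rightarrow> nat \<Rightarrow> real" where
  "clause_density eps k = 2 ^ k * ln 2 - (1 + ln 2) / 2 - eps k"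

end

theory Submission
  imports Defs "HOL-Real_Asymp.Real_Asymp"
begin




lemma card_insert_le_Suc: "finite B \<Longrightarrow> card (insert x B) \<le> Suc (card B)"
  by (simp add: card_insert_if)

lemma hall_aux:
  "\<And>I A. card I = n \<Longrightarrow> finite I \<Longrightarrow> (\<forall>i\<in>I. finite (A i)) \<Longrightarrow>
   (\<forall>S\<subseteq>I. card S \<le> card (\<Union>(A ` S))) \<Longrightarrow>
   \<exists>f. inj_on f I \<and> (\<forall>i\<in>I. f i \<in> A i)"
proof (induction n rule: less_induct)
  case (less n I A)
  show ?case
  proof (cases "I = {}")
    case True then show ?thesis by auto
  next
    case Ine: False
    show ?thesis
    proof (cases "\<exists>S. S \<subseteq> I \<and> S \<noteq> {} \<and> S \<noteq> I \<and> card (\<Union>(A ` S)) = card S")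
      case True
      then obtain S0 where S0: "S0 \<subseteq> I" "S0 \<noteq> {}" "S0 \<noteq> I" "card (\<Union>(A ` S0)) = card S0" by blast
      have fS0: "finite S0" using S0(1) less.prems(2) finite_subset by blast
      have cS0: "card S0 < n" using S0 less.prems(1,2) by (metis psubsetI psubset_card_mono)
      obtain f1 where f1: "inj_on f1 S0" "\<forall>i\<in>S0. f1 i \<in> A i"
      proof -
        have "\<forall>i\<in>S0. finite (A i)" using less.prems(3) S0(1) by blast
        moreover have "\<forall>S\<subseteq>S0. card S \<le> card (\<Union>(A ` S))" using less.prems(4) S0(1) by blast
        ultimately show ?thesis using less.IH[OF cS0 refl fS0, of A] that by blast
      qed
      define X where "X = \<Union>(A ` S0)"
      have fX: "finite X" using fS0 less.prems(3) S0(1) X_def by auto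
      define I2 where "I2 = I - S0"
      have cI2: "card I2 < n"
      proof -
        have "card S0 > 0" using fS0 S0(2) by (simp add: card_gt_0_iff)
        moreover have "card (I - S0) = card I - card S0" using card_Diff_subset[OF fS0 S0(1)] .
        moreover have "card S0 \<le> card I" using card_mono[OF less.prems(2) S0(1)] .
        ultimately show ?thesis using less.prems(1) unfolding I2_def by linarith
      qed
      have fI2: "finite I2" using less.prems(2) I2_def by auto
      have H2: "\<forall>S\<subseteq>I2. card S \<le> card (\<Union>((\<lambda>i. A i - X) ` S))"
      proof (intro allI impI)
        fix S assume S: "S \<subseteq> I2"
        have fS: "finite S" using S fI2 finite_subset by blast
        have dis: "S \<inter> S0 = {}" using S I2_def by auto
        have "card S + card S0 = card (S \<union> S0)" using dis fS fS0 by (simp add: card_Un_disjoint)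
        also have "\<dots> \<le> card (\<Union>(A ` (S \<union> S0)))" using less.prems(4)[rule_format, of "S \<union> S0"] S S0(1) I2_def by blast
        also have "\<Union>(A ` (S \<union> S0)) = \<Union>((\<lambda>i. A i - X) ` S) \<union> X" unfolding X_def by auto
        also have "card \<dots> \<le> card (\<Union>((\<lambda>i. A i - X) ` S)) + card X" by (rule card_Un_le)
        finally show "card S \<le> card (\<Union>((\<lambda>i. A i - X) ` S))" using S0(4) X_def by simp
      qed
      obtain f2 where f2: "inj_on f2 I2" "\<forall>i\<in>I2. f2 i \<in> A i - X"
        using less.IH[OF cI2 refl fI2, of "\<lambda>i. A i - X"] H2 less.prems(3) I2_def by auto
      define f where "f i = (if i \<in> S0 then f1 i else f2 i)" for i
      have "inj_on f I"
      proof (rule inj_onI)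
        fix x y assume xy: "x \<in> I" "y \<in> I" "f x = f y"
        show "x = y"
        proof (cases "x \<in> S0"; cases "y \<in> S0")
          assume "x \<in> S0" "y \<in> S0" then show ?thesis using xy f1(1) f_def by (auto dest: inj_onD)
        next
          assume a: "x \<in> S0" "y \<notin> S0"
          then have "f x \<in> X" using f1(2) X_def f_def by auto
          moreover have "f y \<notin> X" using a xy f2(2) I2_def f_def by auto
          ultimately show ?thesis using xy by auto
        next
          assume a: "x \<notin> S0" "y \<in> S0"
          then have "f y \<in> X" using f1(2) X_def f_def by auto
          moreover have "f x \<notin> X" using a xy(1) f2(2) I2_def f_def by auto
          ultimately show ?thesis using xy by auto
        next
          assume "x \<notin> S0" "y \<notin> S0" then show ?thesis using xy f2(1) f_def I2_def by (auto dest: inj_onD)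
        qed
      qed
      moreover have "\<forall>i\<in>I. f i \<in> A i" using f1 f2 f_def I2_def by auto
      ultimately show ?thesis by blast
    next
      case False
      then have strict: "\<forall>S. S \<subseteq> I \<and> S \<noteq> {} \<and> S \<noteq> I \<longrightarrow> card S < card (\<Union>(A ` S))"
        using less.prems(4) by (metis le_neq_implies_less)
      obtain i0 where i0: "i0 \<in> I" using Ine by blast
      have "card {i0} \<le> card (A i0)" using less.prems(4)[rule_format, of "{i0}"] i0 by auto
      then obtain x where x: "x \<in> A i0" by fastforce
      define I2 where "I2 = I - {i0}"
      have fI2: "finite I2" using less.prems(2) I2_def by auto
      have cI2: "card I2 < n" using less.prems(1,2) i0 I2_def
        by (metis card_Diff1_less)
      have H2: "\<forall>S\<subseteq>I2. card S \<le> card (\<Union>((\<lambda>i. A i - {x}) ` S))"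
      proof (intro allI impI)
        fix S assume S: "S \<subseteq> I2"
        show "card S \<le> card (\<Union>((\<lambda>i. A i - {x}) ` S))"
        proof (cases "S = {}")
          case True then show ?thesis by simp
        next
          case False
          have fS: "finite S" using S fI2 finite_subset by blast
          have "S \<subseteq> I" "S \<noteq> I" using S I2_def i0 by auto
          then have "card S < card (\<Union>(A ` S))" using strict False by blast
          moreover have "\<Union>(A ` S) \<subseteq> insert x (\<Union>((\<lambda>i. A i - {x}) ` S))" by auto
          moreover have "finite (\<Union>((\<lambda>i. A i - {x}) ` S))" using fS less.prems(3) \<open>S \<subseteq> I\<close> by auto
          ultimately have "card S < card (insert x (\<Union>((\<lambda>i. A i - {x}) ` S)))"
            by (meson card_mono finite.insertI order_less_le_trans)
          moreover have "card (insert x (\<Union>((\<lambda>i. A i - {x}) ` S))) \<le> Suc (card (\<Union>((\<lambda>i. A i - {x}) ` S)))"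
            using card_insert_le_Suc[of "\<Union>((\<lambda>i. A i - {x}) ` S)" x] \<open>finite (\<Union>((\<lambda>i. A i - {x}) ` S))\<close> by blast
          ultimately show ?thesis by linarith
        qed
      qed
      obtain f2 where f2: "inj_on f2 I2" "\<forall>i\<in>I2. f2 i \<in> A i - {x}"
        using less.IH[OF cI2 refl fI2, of "\<lambda>i. A i - {x}"] H2 less.prems(3) I2_def by auto
      define f where "f i = (if i = i0 then x else f2 i)" for i
      have "inj_on f I"
        using f2 unfolding f_def I2_def inj_on_def by auto
      moreover have "\<forall>i\<in>I. f i \<in> A i" using f2 x f_def I2_def by auto
      ultimately show ?thesis by blast
    qed
  qed
qed

lemma hall:
  assumes "finite I" "\<forall>i\<in>I. finite (A i)" "\<forall>S\<subseteq>I. card S \<le> card (\<Union>(A ` S))"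
  shows "\<exists>f. inj_on f I \<and> (\<forall>i\<in>I. f i \<in> A i)"
  using hall_aux[OF refl assms] .


definition tau :: "nat \<Rightarrow> real" where
  "tau k = real k ^ 3 * 2 powr (real k / 2)"

definition halfdev :: "nat \<Rightarrow> real \<Rightarrow> nat \<Rightarrow> nat \<Rightarrow> cnf \<Rightarrow> nat set" where
  "halfdev k r N M \<Phi> = {x. x < N \<and>
     max \<bar>real (degree k \<Phi> {..<M} (x, True)) - real k * r / 2\<bar>
         \<bar>real (degree k \<Phi> {..<M} (x, False)) - real k * r / 2\<bar> > tau k / 2}"

definition cnt3 :: "nat \<Rightarrow> nat \<Rightarrow> cnf \<Rightarrow> nat set \<Rightarrow> nat" where
  "cnt3 k M \<Phi> T = card {i. i < M \<and> 3 \<le> hits k \<Phi> T i}"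

definition goodA :: "nat \<Rightarrow> nat \<Rightarrow> nat \<Rightarrow> real \<Rightarrow> cnf \<Rightarrow> bool" where
  "goodA k N M \<delta> \<Phi> = (\<forall>T \<subseteq> {..<N}. real (card T) \<le> \<delta> * real N \<longrightarrow> cnt3 k M \<Phi> T \<le> card T)"

definition occ :: "nat \<Rightarrow> cnf \<Rightarrow> nat set \<Rightarrow> nat \<Rightarrow> nat" where
  "occ k \<Phi> R x = card {(i, j). i \<in> R \<and> j < k \<and> fst (\<Phi> (i, j)) = x}"

lemma hits_mono: "T \<subseteq> T' \<Longrightarrow> hits k \<Phi> T i \<le> hits k \<Phi> T' i"
  unfolding hits_def by (rule card_mono) auto

lemma fin_pos: "finite R \<Longrightarrow> finite {(i, j). i \<in> R \<and> j < (k::nat) \<and> P i j}"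
proof (rule finite_subset)
  show "{(i, j). i \<in> R \<and> j < k \<and> P i j} \<subseteq> R \<times> {..<k}" by auto
  assume "finite R" then show "finite (R \<times> {..<k})" by (intro finite_cartesian_product) auto
qed

lemma degree_split:
  assumes "C \<subseteq> A" "finite A"
  shows "degree k \<Phi> A l = degree k \<Phi> C l + degree k \<Phi> (A - C) l"
proof -
  have fA: "finite C" "finite (A - C)" using assms finite_subset by auto
  have "{(i, j). i \<in> A \<and> j < k \<and> \<Phi> (i, j) = l} =
        {(i, j). i \<in> C \<and> j < k \<and> \<Phi> (i, j) = l} \<union> {(i, j). i \<in> A - C \<and> j < k \<and> \<Phi> (i, j) = l}"
    using assms by auto
  moreover have "finite {(i, j). i \<in> C \<and> j < k \<and> \<Phi> (i, j) = l}" by (rule fin_pos[OF fA(1)])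
  moreover have "finite {(i, j). i \<in> A - C \<and> j < k \<and> \<Phi> (i, j) = l}" by (rule fin_pos[OF fA(2)])
  moreover have "{(i, j). i \<in> C \<and> j < k \<and> \<Phi> (i, j) = l} \<inter> {(i, j). i \<in> A - C \<and> j < k \<and> \<Phi> (i, j) = l} = {}"
    by auto
  ultimately show ?thesis unfolding degree_def by (simp only: card_Un_disjoint)
qed

lemma degree_le_occ: "finite R \<Longrightarrow> degree k \<Phi> R (x, b) \<le> occ k \<Phi> R x"
  unfolding degree_def occ_def by (rule card_mono) (auto intro: fin_pos)

lemma occ_mono: "finite R' \<Longrightarrow> R \<subseteq> R' \<Longrightarrow> occ k \<Phi> R x \<le> occ k \<Phi> R' x"
  unfolding occ_def by (rule card_mono) (auto intro: fin_pos)

lemma sum_occ: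
  assumes "finite R" "finite W"
  shows "(\<Sum>x\<in>W. occ k \<Phi> R x) \<le> k * card R"
proof -
  have "(\<Sum>x\<in>W. occ k \<Phi> R x) = card (\<Union>x\<in>W. {(i, j). i \<in> R \<and> j < k \<and> fst (\<Phi> (i, j)) = x})"
    unfolding occ_def by (rule card_UN_disjoint[symmetric]) (auto intro: fin_pos simp: assms)
  also have "\<dots> \<le> card (R \<times> {..<k})" by (rule card_mono) (auto simp: assms)
  finally show ?thesis by (simp add: card_cartesian_product mult.commute)
qed

definition Inv :: "nat \<Rightarrow> real \<Rightarrow> nat \<Rightarrow> nat \<Rightarrow> cnf \<Rightarrow> nat set \<times> nat set \<Rightarrow> bool" where
  "Inv k r N M \<Phi> st = (fst st \<subseteq> {..<M} \<and> snd st \<subseteq> {..<N} \<and>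
     (\<forall>i\<in>{..<M} - fst st. 3 \<le> hits k \<Phi> (snd st) i) \<and>
     (\<forall>x\<in>snd st - halfdev k r N M \<Phi>. real (occ k \<Phi> ({..<M} - fst st) x) > tau k / 2) \<and>
     card (snd st) \<le> 2 * card (halfdev k r N M \<Phi>))"

lemma halfdev_sub: "halfdev k r N M \<Phi> \<subseteq> {..<N}"
  unfolding halfdev_def by auto

lemma new_var_occ:
  assumes "C' \<subseteq> {..<M}" "x \<in> deviating k r N \<Phi> C'" "x \<notin> halfdev k r N M \<Phi>"
  shows "real (occ k \<Phi> ({..<M} - C') x) > tau k / 2"
proof -
  let ?m = "real k * r / 2"
  have xN: "x < N" using assms(2) unfolding deviating_def by auto
  have dev: "max \<bar>real (degree k \<Phi> C' (x, True)) - ?m\<bar> \<bar>real (degree k \<Phi> C' (x, False)) - ?m\<bar> > tau k"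
    using assms(2) unfolding deviating_def tau_def by auto
  have nh0: "max \<bar>real (degree k \<Phi> {..<M} (x, True)) - ?m\<bar> \<bar>real (degree k \<Phi> {..<M} (x, False)) - ?m\<bar> \<le> tau k / 2"
    using assms(3) xN unfolding halfdev_def by (simp add: not_less)
  have nh: "\<bar>real (degree k \<Phi> {..<M} (x, b)) - ?m\<bar> \<le> tau k / 2" for b
  proof (cases b)
    case True then show ?thesis using nh0 by (simp only: max.bounded_iff)
  next
    case False then show ?thesis using nh0 by (simp only: max.bounded_iff)
  qed
  obtain b where b: "\<bar>real (degree k \<Phi> C' (x, b)) - ?m\<bar> > tau k"
    using dev by (metis max_def)
  have split: "degree k \<Phi> {..<M} (x, b) = degree k \<Phi> C' (x, b) + degree k \<Phi> ({..<M} - C') (x, b)"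
    by (rule degree_split[OF assms(1)]) simp
  have "real (degree k \<Phi> ({..<M} - C') (x, b)) > tau k / 2"
    using b nh[of b] split by linarith
  moreover have "degree k \<Phi> ({..<M} - C') (x, b) \<le> occ k \<Phi> ({..<M} - C') x"
    by (rule degree_le_occ) simp
  ultimately show ?thesis by linarith
qed

lemma card_W_bound:
  assumes "finite W" "finite R" "\<forall>x\<in>W. real (occ k \<Phi> R x) > t / 2" "t > 0"
  shows "real (card W) * (t / 2) \<le> real k * real (card R)"
proof -
  have "real (card W) * (t / 2) = (\<Sum>x\<in>W. t / 2)" by simp
  also have "\<dots> \<le> (\<Sum>x\<in>W. real (occ k \<Phi> R x))"
    by (rule sum_mono) (use assms(3) in auto)
  also have "\<dots> = real (\<Sum>x\<in>W. occ k \<Phi> R x)" by simp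
  also have "\<dots> \<le> real (k * card R)" using sum_occ[OF assms(2,1)] by (simp only: of_nat_le_iff)
  finally show ?thesis by simp
qed

lemma Inv_step:
  assumes gA: "goodA k N M \<delta> \<Phi>" and hH: "2 * real (card (halfdev k r N M \<Phi>)) \<le> \<delta> * real N"
    and tk: "4 * real k \<le> tau k" and tp: "tau k > 0"
    and I: "Inv k r N M \<Phi> st"
  shows "Inv k r N M \<Phi> (pr2_step k r N \<Phi> st)"
proof (cases "\<exists>i\<in>fst st. hits k \<Phi> (snd st) i \<ge> 3")
  case False
  then show ?thesis using I unfolding pr2_step_def by (simp add: Let_def)
next
  case True
  obtain C U where st: "st = (C, U)" by (cases st)
  define H where "H = halfdev k r N M \<Phi>"
  define C' where "C' = {i\<in>C. hits k \<Phi> U i < 3}"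
  define U' where "U' = U \<union> deviating k r N \<Phi> C'"
  have step: "pr2_step k r N \<Phi> st = (C', U')"
    using True unfolding pr2_step_def st C'_def U'_def by (simp add: Let_def)
  have IC: "C \<subseteq> {..<M}" "U \<subseteq> {..<N}" "\<forall>i\<in>{..<M} - C. 3 \<le> hits k \<Phi> U i"
    "\<forall>x\<in>U - H. real (occ k \<Phi> ({..<M} - C) x) > tau k / 2" "card U \<le> 2 * card H"
    using I unfolding Inv_def st H_def by auto
  have C'M: "C' \<subseteq> {..<M}" using IC(1) C'_def by auto
  have U'N: "U' \<subseteq> {..<N}" using IC(2) unfolding U'_def deviating_def by auto
  have hitsU': "\<forall>i\<in>{..<M} - C'. 3 \<le> hits k \<Phi> U' i"
  proof
    fix i assume i: "i \<in> {..<M} - C'"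
    have "3 \<le> hits k \<Phi> U i" using i IC(3) C'_def by (cases "i \<in> C") auto
    moreover have "hits k \<Phi> U i \<le> hits k \<Phi> U' i" by (rule hits_mono) (auto simp: U'_def)
    ultimately show "3 \<le> hits k \<Phi> U' i" by simp
  qed
  have occU': "\<forall>x\<in>U' - H. real (occ k \<Phi> ({..<M} - C') x) > tau k / 2"
  proof
    fix x assume x: "x \<in> U' - H"
    show "real (occ k \<Phi> ({..<M} - C') x) > tau k / 2"
    proof (cases "x \<in> U")
      case True
      then have "real (occ k \<Phi> ({..<M} - C) x) > tau k / 2" using IC(4) x by auto
      moreover have "occ k \<Phi> ({..<M} - C) x \<le> occ k \<Phi> ({..<M} - C') x"
        by (rule occ_mono) (auto simp: C'_def)
      ultimately show ?thesis by linarith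
    next
      case False
      then have "x \<in> deviating k r N \<Phi> C'" using x U'_def by auto
      then show ?thesis using new_var_occ[OF C'M] x H_def by auto
    qed
  qed
  have fH: "finite H" using halfdev_sub[of k r N M \<Phi>] H_def finite_subset by auto
  have fU: "finite U" using IC(2) finite_subset by auto
  have R'sub: "{..<M} - C' \<subseteq> {i. i < M \<and> 3 \<le> hits k \<Phi> U i}"
    using IC(3) C'_def by auto
  have "real (card U) \<le> real (2 * card H)" using IC(5) by (simp only: of_nat_le_iff)
  then have "real (card U) \<le> \<delta> * real N" using hH H_def by simp
  then have "cnt3 k M \<Phi> U \<le> card U" using gA IC(2) unfolding goodA_def by auto
  then have cR': "card ({..<M} - C') \<le> 2 * card H"
    using card_mono[OF _ R'sub] IC(5) unfolding cnt3_def by fastforce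
  have fW: "finite (U' - H)" using U'N finite_subset by auto
  have "real (card (U' - H)) * (tau k / 2) \<le> real k * real (card ({..<M} - C'))"
    by (rule card_W_bound[OF fW _ occU' tp]) simp
  also have "\<dots> \<le> real k * (2 * real (card H))" using cR'
    by (intro mult_left_mono) auto
  finally have "real (card (U' - H)) * (tau k / 2) \<le> real k * (2 * real (card H))" .
  moreover have "4 * real k * real (card H) \<le> tau k * real (card H)"
    using tk by (intro mult_right_mono) auto
  ultimately have "real (card (U' - H)) * (tau k / 2) \<le> real (card H) * (tau k / 2)"
    by (simp add: algebra_simps)
  then have "real (card (U' - H)) \<le> real (card H)" using tp
    by (simp add: mult_le_cancel_right_pos)
  then have cW: "card (U' - H) \<le> card H" by (simp only: of_nat_le_iff)
  have "card U' \<le> card (H \<union> (U' - H))" by (rule card_mono) (use fH fW in auto)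
  also have "\<dots> \<le> card H + card (U' - H)" by (rule card_Un_le)
  finally have "card U' \<le> 2 * card H" using cW by linarith
  then show ?thesis unfolding Inv_def step using C'M U'N hitsU' occU' H_def by auto
qed


definition fixp :: "nat \<Rightarrow> cnf \<Rightarrow> nat set \<times> nat set \<Rightarrow> bool" where
  "fixp k \<Phi> st = (\<not> (\<exists>i\<in>fst st. 3 \<le> hits k \<Phi> (snd st) i))"

lemma pr2_fix: "fixp k \<Phi> st \<Longrightarrow> pr2_step k r N \<Phi> st = st"
  unfolding fixp_def pr2_step_def by (simp add: Let_def)

lemma pr2_shrink:
  assumes "finite (fst st)" "\<not> fixp k \<Phi> st"
  shows "card (fst (pr2_step k r N \<Phi> st)) < card (fst st)"
proof -
  obtain i where i: "i \<in> fst st" "3 \<le> hits k \<Phi> (snd st) i" using assms(2) unfolding fixp_def by auto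
  have "fst (pr2_step k r N \<Phi> st) = {i\<in>fst st. hits k \<Phi> (snd st) i < 3}"
    using i unfolding pr2_step_def by (auto simp: Let_def)
  moreover have "{i\<in>fst st. hits k \<Phi> (snd st) i < 3} \<subset> fst st"
  proof -
    have "i \<notin> {i\<in>fst st. hits k \<Phi> (snd st) i < 3}" using i by simp
    then show ?thesis using i by blast
  qed
  ultimately show ?thesis using assms(1) by (simp add: psubset_card_mono)
qed

lemma pruned_props:
  assumes gA: "goodA k N M \<delta> \<Phi>" and hH: "2 * real (card (halfdev k r N M \<Phi>)) \<le> \<delta> * real N"
    and tk: "4 * real k \<le> tau k" and tp: "tau k > 0"
  shows "Inv k r N M \<Phi> (pruned k r N M \<Phi>) \<and> fixp k \<Phi> (pruned k r N M \<Phi>)"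
proof -
  define st0 where "st0 = ({..<M}, deviating k r N \<Phi> {..<M})"
  have P: "Inv k r N M \<Phi> ((pr2_step k r N \<Phi> ^^ m) st0) \<and>
      (fixp k \<Phi> ((pr2_step k r N \<Phi> ^^ m) st0) \<or> card (fst ((pr2_step k r N \<Phi> ^^ m) st0)) + m \<le> M)" for m
  proof (induction m)
    case 0
    have sub: "deviating k r N \<Phi> {..<M} \<subseteq> halfdev k r N M \<Phi>"
      unfolding deviating_def halfdev_def tau_def using tp unfolding tau_def by auto
    have "card (deviating k r N \<Phi> {..<M}) \<le> card (halfdev k r N M \<Phi>)"
      by (rule card_mono[OF _ sub]) (rule finite_subset[OF halfdev_sub], simp)
    then show ?case unfolding Inv_def st0_def using sub by (auto simp: deviating_def)
  next
    case (Suc m)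
    let ?s = "(pr2_step k r N \<Phi> ^^ m) st0"
    have I: "Inv k r N M \<Phi> (pr2_step k r N \<Phi> ?s)" using Inv_step[OF gA hH tk tp] Suc by auto
    show ?case
    proof (cases "fixp k \<Phi> ?s")
      case True then show ?thesis using I pr2_fix[OF True] by simp
    next
      case False
      have fin: "finite (fst ?s)" using Suc unfolding Inv_def using finite_subset by blast
      have "card (fst (pr2_step k r N \<Phi> ?s)) < card (fst ?s)" by (rule pr2_shrink[OF fin False])
      then show ?thesis using I Suc False by auto
    qed
  qed
  have eq: "pruned k r N M \<Phi> = (pr2_step k r N \<Phi> ^^ M) st0" unfolding pruned_def st0_def by simp
  have fin: "finite (fst (pruned k r N M \<Phi>))" using P[of M] unfolding eq Inv_def using finite_subset by blast
  show ?thesis using P[of M] fin unfolding eq[symmetric] by (auto simp: fixp_def)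
qed

lemma extension:
  assumes gA: "goodA k N M \<delta> \<Phi>" and hH: "2 * real (card (halfdev k r N M \<Phi>)) \<le> \<delta> * real N"
    and tk: "4 * real k \<le> tau k" and tp: "tau k > 0"
  shows "extension_property k r N M \<Phi>"
  unfolding extension_property_def
proof (intro allI impI)
  fix a assume sat: "satisfies_pruned k r N M \<Phi> a"
  obtain C U where CU: "pruned k r N M \<Phi> = (C, U)" by (cases "pruned k r N M \<Phi>")
  have IF: "Inv k r N M \<Phi> (C, U)" "fixp k \<Phi> (C, U)" using pruned_props[OF assms] CU by auto
  have IC: "C \<subseteq> {..<M}" "U \<subseteq> {..<N}" "\<forall>i\<in>{..<M} - C. 3 \<le> hits k \<Phi> U i"
     "card U \<le> 2 * card (halfdev k r N M \<Phi>)"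
    using IF(1) unfolding Inv_def by auto
  have satC: "\<forall>i\<in>C. \<exists>j<k. fst (\<Phi> (i, j)) \<notin> U \<and> lit_true a (\<Phi> (i, j))"
    using sat CU unfolding satisfies_pruned_def by (simp add: Let_def)
  define R where "R = {..<M} - C"
  define A where "A i = {x\<in>U. \<exists>j<k. fst (\<Phi> (i, j)) = x}" for i
  have fU: "finite U" using IC(2) finite_subset by auto
  have cU: "real (card U) \<le> \<delta> * real N"
  proof -
    have "real (card U) \<le> real (2 * card (halfdev k r N M \<Phi>))" using IC(4) by (simp only: of_nat_le_iff)
    then show ?thesis using hH by simp
  qed
  have hallc: "\<forall>S\<subseteq>R. card S \<le> card (\<Union>(A ` S))"
  proof (intro allI impI)
    fix S assume S: "S \<subseteq> R"
    define T where "T = \<Union>(A ` S)"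
    have TU: "T \<subseteq> U" unfolding T_def A_def by auto
    have "real (card T) \<le> real (card U)" using card_mono[OF fU TU] by simp
    then have "cnt3 k M \<Phi> T \<le> card T" using gA TU IC(2) cU unfolding goodA_def by auto
    moreover have "S \<subseteq> {i. i < M \<and> 3 \<le> hits k \<Phi> T i}"
    proof
      fix i assume i: "i \<in> S"
      have "hits k \<Phi> U i \<le> hits k \<Phi> T i" unfolding hits_def
      proof (rule card_mono)
        show "{j. j < k \<and> fst (\<Phi> (i, j)) \<in> U} \<subseteq> {j. j < k \<and> fst (\<Phi> (i, j)) \<in> T}"
          using i unfolding T_def A_def by blast
      qed simp
      then show "i \<in> {i. i < M \<and> 3 \<le> hits k \<Phi> T i}" using i S IC(3) R_def by force
    qed
    then have "card S \<le> card {i. i < M \<and> 3 \<le> hits k \<Phi> T i}"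
      by (rule card_mono[rotated]) simp
    ultimately show "card S \<le> card (\<Union>(A ` S))"
      unfolding cnt3_def T_def by linarith
  qed
  have fR: "finite R" unfolding R_def by simp
  obtain f where f: "inj_on f R" "\<forall>i\<in>R. f i \<in> A i"
    using hall[OF fR _ hallc] fU unfolding A_def by auto
  define J where "J i = (SOME j. j < k \<and> fst (\<Phi> (i, j)) = f i)" for i
  have J: "J i < k \<and> fst (\<Phi> (i, J i)) = f i" if "i \<in> R" for i
  proof -
    have "\<exists>j. j < k \<and> fst (\<Phi> (i, j)) = f i" using f(2) that unfolding A_def by auto
    then show ?thesis unfolding J_def by (rule someI_ex)
  qed
  define g where "g = the_inv_into R f"
  define \<sigma> where "\<sigma> x = (if x \<in> f ` R then snd (\<Phi> (g x, J (g x))) else a x)" for x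
  have fRU: "f ` R \<subseteq> U" using f(2) unfolding A_def by auto
  have "satisfies k M \<Phi> \<sigma>"
    unfolding satisfies_def
  proof (intro allI impI)
    fix i assume i: "i < M"
    show "\<exists>j<k. lit_true \<sigma> (\<Phi> (i, j))"
    proof (cases "i \<in> C")
      case True
      then obtain j where j: "j < k" "fst (\<Phi> (i, j)) \<notin> U" "lit_true a (\<Phi> (i, j))" using satC by auto
      then have "fst (\<Phi> (i, j)) \<notin> f ` R" using fRU by auto
      then have "lit_true \<sigma> (\<Phi> (i, j))" using j(3) unfolding lit_true_def \<sigma>_def by simp
      then show ?thesis using j(1) by auto
    next
      case False
      then have iR: "i \<in> R" using i R_def by auto
      have gi: "g (f i) = i" unfolding g_def using the_inv_into_f_f[OF f(1) iR] .
      have "lit_true \<sigma> (\<Phi> (i, J i))"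
        unfolding lit_true_def \<sigma>_def using J[OF iR] iR gi by auto
      then show ?thesis using J[OF iR] by auto
    qed
  qed
  moreover have "\<forall>x\<in>reduced_vars k r N M \<Phi>. \<sigma> x = a x"
    using fRU CU unfolding reduced_vars_def \<sigma>_def by auto
  ultimately show "\<exists>\<sigma>. satisfies k M \<Phi> \<sigma> \<and> (\<forall>x\<in>reduced_vars k r N M \<Phi>. \<sigma> x = a x)" by blast
qed


definition Pos :: "nat \<Rightarrow> nat \<Rightarrow> (nat \<times> nat) set" where
  "Pos k M = {..<M} \<times> {..<k}"

lemma card_lits: "card (lits N) = 2 * N"
  unfolding lits_def by (simp add: card_cartesian_product)

lemma finite_lits: "finite (lits N)"
  unfolding lits_def by simp

lemma finite_Pos: "finite (Pos k M)" unfolding Pos_def by simp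

lemma card_Pos: "card (Pos k M) = M * k" unfolding Pos_def by (simp add: card_cartesian_product)

lemma formulas_Pos: "formulas k N M = PiE (Pos k M) (\<lambda>_. lits N)"
  unfolding formulas_def Pos_def by simp

lemma finite_formulas: "finite (formulas k N M)"
  unfolding formulas_Pos by (intro finite_PiE finite_Pos finite_lits)

lemma card_formulas: "card (formulas k N M) = (2 * N) ^ (M * k)"
  unfolding formulas_Pos by (simp add: card_PiE finite_Pos card_lits card_Pos)

lemma count_fix:
  assumes "P \<subseteq> Pos k M" "B \<subseteq> lits N"
  shows "card {\<Phi>\<in>formulas k N M. \<forall>p\<in>P. \<Phi> p \<in> B} = card B ^ card P * (2 * N) ^ (M * k - card P)"
proof -
  have "{\<Phi>\<in>formulas k N M. \<forall>p\<in>P. \<Phi> p \<in> B} = PiE (Pos k M) (\<lambda>p. if p \<in> P then B else lits N)"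
    unfolding formulas_Pos using assms by (auto simp: PiE_iff extensional_def split: if_splits; blast)
  then have "card {\<Phi>\<in>formulas k N M. \<forall>p\<in>P. \<Phi> p \<in> B} = (\<Prod>p\<in>Pos k M. card (if p \<in> P then B else lits N))"
    by (simp add: card_PiE finite_Pos)
  also have "\<dots> = (\<Prod>p\<in>Pos k M. if p \<in> P then card B else 2 * N)"
    by (intro prod.cong) (auto simp: card_lits)
  also have "\<dots> = (\<Prod>p\<in>P. card B) * (\<Prod>p\<in>Pos k M - P. 2 * N)"
    using prod.If_cases[OF finite_Pos, of "\<lambda>p. p \<in> P" "\<lambda>_. card B" "\<lambda>_. 2 * N" k M] assms(1)
    by (simp add: Int_absorb1 Diff_eq)
  also have "\<dots> = card B ^ card P * (2 * N) ^ (M * k - card P)"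
    using assms(1) finite_Pos by (simp add: card_Diff_subset card_Pos finite_subset)
  finally show ?thesis .
qed

lemma prob_formula:
  assumes "N > 0"
  shows "measure_pmf.prob (random_formula k N M) E = real (card (formulas k N M \<inter> E)) / real (card (formulas k N M))"
proof -
  have "formulas k N M \<noteq> {}" unfolding formulas_Pos using assms
    by (auto simp add: PiE_eq_empty_iff lits_def)
  then show ?thesis unfolding random_formula_def by (simp add: measure_pmf_of_set finite_formulas)
qed





definition EvA :: "nat \<Rightarrow> nat \<Rightarrow> nat \<Rightarrow> nat set \<Rightarrow> nat set \<Rightarrow> (nat \<Rightarrow> nat set) \<Rightarrow> cnf set" where
  "EvA k N M T S Jf = {\<Phi>\<in>formulas k N M. \<forall>p\<in>Sigma S Jf. \<Phi> p \<in> T \<times> UNIV}"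

definition JS :: "nat \<Rightarrow> nat set set" where
  "JS k = {J. J \<subseteq> {..<k} \<and> card J = 3}"

lemma badA_subset:
  "formulas k N M - {\<Phi>. goodA k N M \<delta> \<Phi>} \<subseteq>
    (\<Union>t\<in>{1..nat \<lfloor>\<delta> * real N\<rfloor>}. \<Union>T\<in>{T. T \<subseteq> {..<N} \<and> card T = t}.
      \<Union>S\<in>{S. S \<subseteq> {..<M} \<and> card S = Suc t}. \<Union>Jf\<in>PiE S (\<lambda>_. JS k). EvA k N M T S Jf)"
proof
  fix \<Phi> assume \<Phi>: "\<Phi> \<in> formulas k N M - {\<Phi>. goodA k N M \<delta> \<Phi>}"
  then obtain T where T: "T \<subseteq> {..<N}" "real (card T) \<le> \<delta> * real N" "cnt3 k M \<Phi> T > card T"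
    unfolding goodA_def by auto
  define t where "t = card T"
  have "T \<noteq> {}"
  proof
    assume "T = {}"
    then have "hits k \<Phi> T i = 0" for i unfolding hits_def by simp
    then have "cnt3 k M \<Phi> T = 0" unfolding cnt3_def by simp
    then show False using T(3) by simp
  qed
  then have t1: "t \<ge> 1" using T(1) t_def finite_subset[of T "{..<N}"] by (simp add: Suc_leI card_gt_0_iff)
  have tf: "t \<le> nat \<lfloor>\<delta> * real N\<rfloor>" using T(2) t_def by (simp add: le_nat_floor)
  obtain S where S: "S \<subseteq> {i. i < M \<and> 3 \<le> hits k \<Phi> T i}" "card S = Suc t"
    using obtain_subset_with_card_n[of "Suc t" "{i. i < M \<and> 3 \<le> hits k \<Phi> T i}"] T(3) t_def
    unfolding cnt3_def by auto
  define Jf where "Jf = restrict (\<lambda>i. SOME J. J \<subseteq> {j. j < k \<and> fst (\<Phi> (i, j)) \<in> T} \<and> card J = 3) S"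
  have Jf: "Jf i \<subseteq> {j. j < k \<and> fst (\<Phi> (i, j)) \<in> T} \<and> card (Jf i) = 3" if "i \<in> S" for i
  proof -
    have c3: "3 \<le> card {j. j < k \<and> fst (\<Phi> (i, j)) \<in> T}" using S(1) that unfolding hits_def by auto
    obtain J where "J \<subseteq> {j. j < k \<and> fst (\<Phi> (i, j)) \<in> T}" "card J = 3"
      using obtain_subset_with_card_n[OF c3] by blast
    then have ex: "\<exists>J. J \<subseteq> {j. j < k \<and> fst (\<Phi> (i, j)) \<in> T} \<and> card J = 3" by blast
    have "Jf i = (SOME J. J \<subseteq> {j. j < k \<and> fst (\<Phi> (i, j)) \<in> T} \<and> card J = 3)"
      unfolding Jf_def using that by simp
    then show ?thesis using someI_ex[OF ex] by simp
  qed
  have JfP: "Jf \<in> PiE S (\<lambda>_. JS k)" unfolding JS_def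
    using Jf by (auto simp: Jf_def)
  have "\<Phi> \<in> EvA k N M T S Jf" unfolding EvA_def
  proof (safe)
    show "\<Phi> \<in> formulas k N M" using \<Phi> by simp
  next
    fix i j assume "i \<in> S" "j \<in> Jf i"
    then have "fst (\<Phi> (i, j)) \<in> T" using Jf by blast
    then show "\<Phi> (i, j) \<in> T \<times> UNIV" by (cases "\<Phi> (i, j)") auto
  qed
  have "S \<subseteq> {..<M}" using S(1) by auto
  show "\<Phi> \<in> (\<Union>t\<in>{1..nat \<lfloor>\<delta> * real N\<rfloor>}. \<Union>T\<in>{T. T \<subseteq> {..<N} \<and> card T = t}.
      \<Union>S\<in>{S. S \<subseteq> {..<M} \<and> card S = Suc t}. \<Union>Jf\<in>PiE S (\<lambda>_. JS k). EvA k N M T S Jf)"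
  proof (rule UN_I[where a=t])
    show "t \<in> {1..nat \<lfloor>\<delta> * real N\<rfloor>}" using t1 tf by simp
    show "\<Phi> \<in> (\<Union>T\<in>{T. T \<subseteq> {..<N} \<and> card T = t}.
      \<Union>S\<in>{S. S \<subseteq> {..<M} \<and> card S = Suc t}. \<Union>Jf\<in>PiE S (\<lambda>_. JS k). EvA k N M T S Jf)"
    proof (rule UN_I[where a=T])
      show "T \<in> {T. T \<subseteq> {..<N} \<and> card T = t}" using T(1) t_def by simp
      show "\<Phi> \<in> (\<Union>S\<in>{S. S \<subseteq> {..<M} \<and> card S = Suc t}. \<Union>Jf\<in>PiE S (\<lambda>_. JS k). EvA k N M T S Jf)"
      proof (rule UN_I[where a=S])
        show "S \<in> {S. S \<subseteq> {..<M} \<and> card S = Suc t}" using \<open>S \<subseteq> {..<M}\<close> S(2) by simp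
        show "\<Phi> \<in> (\<Union>Jf\<in>PiE S (\<lambda>_. JS k). EvA k N M T S Jf)"
          using JfP \<open>\<Phi> \<in> EvA k N M T S Jf\<close> by blast
      qed
    qed
  qed
qed

lemma card_EvA:
  assumes "T \<subseteq> {..<N}" "card T = t" "S \<subseteq> {..<M}" "card S = Suc t" "Jf \<in> PiE S (\<lambda>_. JS k)" "N > 0"
  shows "real (card (EvA k N M T S Jf)) = real (card (formulas k N M)) * (real t / real N) ^ (3 * Suc t)"
proof -
  have fS: "finite S" using assms(3) finite_subset by auto
  have P: "Sigma S Jf \<subseteq> Pos k M" using assms(3,5) unfolding Pos_def JS_def by (auto simp: PiE_iff)
  have B: "T \<times> (UNIV::bool set) \<subseteq> lits N" using assms(1) unfolding lits_def by auto
  have cP: "card (Sigma S Jf) = 3 * Suc t"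
  proof -
    have "card (Sigma S Jf) = (\<Sum>i\<in>S. card (Jf i))"
      using fS assms(5) unfolding JS_def by (intro card_SigmaI) (auto simp: PiE_iff finite_subset)
    also have "\<dots> = (\<Sum>i\<in>S. 3)" using assms(5) unfolding JS_def by (intro sum.cong) (auto simp: PiE_iff)
    finally show ?thesis using assms(4) by simp
  qed
  have cB: "card (T \<times> (UNIV::bool set)) = 2 * t" using assms(2) by (simp add: card_cartesian_product mult.commute)
  have le: "3 * Suc t \<le> M * k" using card_mono[OF finite_Pos P] cP card_Pos by simp
  have "card (EvA k N M T S Jf) = (2 * t) ^ (3 * Suc t) * (2 * N) ^ (M * k - 3 * Suc t)"
    unfolding EvA_def using count_fix[OF P B] cP cB by simp
  then have "real (card (EvA k N M T S Jf)) = (2 * real t) ^ (3 * Suc t) * (2 * real N) ^ (M * k - 3 * Suc t)"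
    by simp
  also have "\<dots> = (2 * real N) ^ (M * k) * (real t / real N) ^ (3 * Suc t)"
  proof -
    have "(2 * real N) ^ (M * k) = (2 * real N) ^ (3 * Suc t) * (2 * real N) ^ (M * k - 3 * Suc t)"
    proof -
      have "(2 * real N) ^ (M * k) = (2 * real N) ^ (3 * Suc t + (M * k - 3 * Suc t))" using le by simp
      then show ?thesis by (simp only: power_add)
    qed
    moreover have "(2 * real t) ^ (3 * Suc t) = (2 * real N) ^ (3 * Suc t) * (real t / real N) ^ (3 * Suc t)"
      using assms(6) by (simp add: power_divide power_mult_distrib)
    ultimately show ?thesis by simp
  qed
  finally show ?thesis by (simp add: card_formulas)
qed

lemma card_UN_real: "finite I \<Longrightarrow> real (card (\<Union>i\<in>I. A i)) \<le> (\<Sum>i\<in>I. real (card (A i)))"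
  using card_UN_le[of I A] by (metis of_nat_le_iff of_nat_sum)

lemma card_JS: "card (JS k) = k choose 3"
  unfolding JS_def using n_subsets[of "{..<k}" 3] by simp

lemma finite_JS: "finite (JS k)"
  unfolding JS_def by (rule finite_subset[of _ "Pow {..<k}"]) auto

lemma probA_card:
  assumes "N > 0"
  shows "real (card (formulas k N M - {\<Phi>. goodA k N M \<delta> \<Phi>})) \<le> real (card (formulas k N M)) *
     (\<Sum>t\<in>{1..nat \<lfloor>\<delta> * real N\<rfloor>}. real (N choose t) * real (M choose Suc t) * real (k choose 3) ^ Suc t *
        (real t / real N) ^ (3 * Suc t))"
proof -
  define F where "F = formulas k N M"
  define c where "c t = real (card F) * (real t / real N) ^ (3 * Suc t)" for t :: nat
  define Ts where "Ts t = {T. T \<subseteq> {..<N} \<and> card T = t}" for t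
  define Ss where "Ss t = {S. S \<subseteq> {..<M} \<and> card S = Suc t}" for t
  define U where "U = (\<Union>t\<in>{1..nat \<lfloor>\<delta> * real N\<rfloor>}. \<Union>T\<in>Ts t. \<Union>S\<in>Ss t. \<Union>Jf\<in>PiE S (\<lambda>_. JS k). EvA k N M T S Jf)"
  have fTs: "finite (Ts t)" for t unfolding Ts_def by (rule finite_subset[of _ "Pow {..<N}"]) auto
  have fSs: "finite (Ss t)" for t unfolding Ss_def by (rule finite_subset[of _ "Pow {..<M}"]) auto
  have fPi: "S \<in> Ss t \<Longrightarrow> finite (PiE S (\<lambda>_. JS k))" for S t
    unfolding Ss_def by (intro finite_PiE finite_JS) (auto intro: finite_subset)
  have sub: "F - {\<Phi>. goodA k N M \<delta> \<Phi>} \<subseteq> U" unfolding F_def U_def Ts_def Ss_def by (rule badA_subset)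
  have UF: "U \<subseteq> F" unfolding U_def F_def EvA_def by auto
  have "real (card (F - {\<Phi>. goodA k N M \<delta> \<Phi>})) \<le> real (card U)"
    using card_mono[OF finite_subset[OF UF] sub] unfolding F_def by (simp add: finite_formulas)
  also have "\<dots> \<le> (\<Sum>t\<in>{1..nat \<lfloor>\<delta> * real N\<rfloor>}. real (card (\<Union>T\<in>Ts t. \<Union>S\<in>Ss t. \<Union>Jf\<in>PiE S (\<lambda>_. JS k). EvA k N M T S Jf)))"
    unfolding U_def by (rule card_UN_real) simp
  also have "\<dots> \<le> (\<Sum>t\<in>{1..nat \<lfloor>\<delta> * real N\<rfloor>}. \<Sum>T\<in>Ts t. real (card (\<Union>S\<in>Ss t. \<Union>Jf\<in>PiE S (\<lambda>_. JS k). EvA k N M T S Jf)))"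
    by (intro sum_mono card_UN_real fTs)
  also have "\<dots> \<le> (\<Sum>t\<in>{1..nat \<lfloor>\<delta> * real N\<rfloor>}. \<Sum>T\<in>Ts t. \<Sum>S\<in>Ss t. real (card (\<Union>Jf\<in>PiE S (\<lambda>_. JS k). EvA k N M T S Jf)))"
    by (intro sum_mono card_UN_real fSs)
  also have "\<dots> \<le> (\<Sum>t\<in>{1..nat \<lfloor>\<delta> * real N\<rfloor>}. \<Sum>T\<in>Ts t. \<Sum>S\<in>Ss t. \<Sum>Jf\<in>PiE S (\<lambda>_. JS k). real (card (EvA k N M T S Jf)))"
    by (intro sum_mono card_UN_real fPi)
  also have "\<dots> = (\<Sum>t\<in>{1..nat \<lfloor>\<delta> * real N\<rfloor>}. \<Sum>T\<in>Ts t. \<Sum>S\<in>Ss t. \<Sum>Jf\<in>PiE S (\<lambda>_. JS k). c t)"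
    unfolding c_def F_def Ts_def Ss_def
    by (intro sum.cong refl) (use card_EvA[OF _ _ _ _ _ assms] in auto)
  also have "\<dots> = (\<Sum>t\<in>{1..nat \<lfloor>\<delta> * real N\<rfloor>}. real (N choose t) * real (M choose Suc t) * real (k choose 3) ^ Suc t * c t)"
  proof (intro sum.cong refl)
    fix t
    have "(\<Sum>S\<in>Ss t. \<Sum>Jf\<in>PiE S (\<lambda>_. JS k). c t) = (\<Sum>S\<in>Ss t. real (k choose 3) ^ Suc t * c t)"
    proof (intro sum.cong refl)
      fix S assume S: "S \<in> Ss t"
      then have "finite S" unfolding Ss_def by (auto intro: finite_subset)
      then have "card (PiE S (\<lambda>_. JS k)) = (k choose 3) ^ Suc t" using S unfolding Ss_def
        by (simp add: card_PiE card_JS)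
      then show "(\<Sum>Jf\<in>PiE S (\<lambda>_. JS k). c t) = real (k choose 3) ^ Suc t * c t" by simp
    qed
    also have "\<dots> = real (M choose Suc t) * (real (k choose 3) ^ Suc t * c t)"
      unfolding Ss_def using n_subsets[of "{..<M}" "Suc t"] by simp
    finally have e: "(\<Sum>S\<in>Ss t. \<Sum>Jf\<in>PiE S (\<lambda>_. JS k). c t) = real (M choose Suc t) * (real (k choose 3) ^ Suc t * c t)" .
    have "card (Ts t) = N choose t" unfolding Ts_def using n_subsets[of "{..<N}" t] by simp
    then show "(\<Sum>T\<in>Ts t. \<Sum>S\<in>Ss t. \<Sum>Jf\<in>PiE S (\<lambda>_. JS k). c t) = real (N choose t) * real (M choose Suc t) * real (k choose 3) ^ Suc t * c t"
      unfolding e by simp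
  qed
  finally show ?thesis unfolding F_def c_def by (simp add: sum_distrib_left ac_simps)
qed


lemma pow_fact_le_exp:
  fixes x :: real assumes "x \<ge> 0" shows "x ^ n / fact n \<le> exp x"
proof -
  have "x ^ n / fact n = (\<Sum>i\<in>{n}. x ^ i / fact i)" by simp
  also have "\<dots> \<le> (\<Sum>i. x ^ i / fact i)"
    using summable_exp_generic[of x] assms by (intro sum_le_suminf) (auto simp: divide_inverse ac_simps)
  also have "\<dots> = exp x" by (simp add: exp_def divide_inverse ac_simps)
  finally show ?thesis .
qed

lemma choose_le_real: "real (n choose t) \<le> real n ^ t / fact t"
proof -
  have "real ((n choose t) * fact t) \<le> real (n ^ t)" using binomial_fact_pow[of n t] by (simp only: of_nat_le_iff)
  then have "real (n choose t) * fact t \<le> real n ^ t" by simp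
  then show ?thesis by (simp add: field_simps)
qed

lemma sq_le_4pow: "real t ^ 2 \<le> 4 ^ t"
proof -
  have "real t \<le> 2 ^ t" using less_exp[of t] by (metis of_nat_le_iff of_nat_numeral of_nat_power less_imp_le)
  then have "real t ^ 2 \<le> (2 ^ t) ^ 2" by (intro power_mono) auto
  also have "\<dots> = (2 ^ 2) ^ t" by (metis power_mult mult.commute)
  also have "\<dots> = 4 ^ t" by simp
  finally show ?thesis .
qed

lemma termA_bound:
  fixes \<rho> K \<delta> c :: real
  assumes t1: "t \<ge> 1" and tN: "real t \<le> \<delta> * real N" and N0: "N > 0" and MN: "real M \<le> \<rho> * real N"
    and r0: "\<rho> \<ge> 0" and K0: "K \<ge> 0" and c_def: "c = exp 2 * \<rho> * K" and cd: "c * \<delta> \<le> 1/8" and c1: "c \<ge> 1"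
  shows "real (N choose t) * real (M choose Suc t) * K ^ Suc t * (real t / real N) ^ (3 * Suc t)
          \<le> 8 * c ^ 2 / real N ^ 2 * (1/2) ^ t"
proof -
  define x where "x = real t"
  define n where "n = real N"
  have n0: "n > 0" using N0 n_def by simp
  have x0: "x \<ge> 0" using x_def by simp
  have d0: "\<delta> \<ge> 0"
  proof (rule ccontr)
    assume "\<not> \<delta> \<ge> 0"
    then have "\<delta> * real N < 0" using N0 by (simp add: mult_neg_pos)
    then show False using tN t1 by linarith
  qed
  have a: "real (N choose t) \<le> n ^ t / fact t" unfolding n_def by (rule choose_le_real)
  have b: "real (M choose Suc t) \<le> (\<rho> * n) ^ Suc t / fact (Suc t)"
  proof -
    have "real (M choose Suc t) \<le> real M ^ Suc t / fact (Suc t)" by (rule choose_le_real)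
    also have "\<dots> \<le> (\<rho> * n) ^ Suc t / fact (Suc t)"
      using MN n_def by (intro divide_right_mono power_mono) auto
    finally show ?thesis .
  qed
  have e1: "x ^ t / fact t \<le> exp x" using pow_fact_le_exp[OF x0] .
  have e2: "x ^ Suc t / fact (Suc t) \<le> exp (x + 1)"
  proof -
    have "x ^ Suc t \<le> (x + 1) ^ Suc t" using x0 by (intro power_mono) auto
    then have "x ^ Suc t / fact (Suc t) \<le> (x + 1) ^ Suc t / fact (Suc t)" by (intro divide_right_mono) auto
    also have "\<dots> \<le> exp (x + 1)" by (rule pow_fact_le_exp) (use x0 in simp)
    finally show ?thesis .
  qed
  have "real (N choose t) * real (M choose Suc t) * K ^ Suc t * (x / n) ^ (3 * Suc t)
        \<le> (n ^ t / fact t) * ((\<rho> * n) ^ Suc t / fact (Suc t)) * K ^ Suc t * (x / n) ^ (3 * Suc t)"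
    using a b K0 x0 n0 by (intro mult_right_mono mult_mono) auto
  also have "\<dots> = (\<rho> * K) ^ Suc t * (x ^ t / fact t) * (x ^ Suc t / fact (Suc t)) * (x / n) ^ Suc (Suc t)"
  proof -
    have e3: "3 * Suc t = t + Suc t + Suc (Suc t)" by simp
    have ex: "x ^ (3 * Suc t) = x ^ t * x ^ Suc t * x ^ Suc (Suc t)" by (simp only: e3 power_add)
    have en: "n ^ (3 * Suc t) = n ^ t * n ^ Suc t * n ^ Suc (Suc t)" by (simp only: e3 power_add)
    show ?thesis using n0 unfolding power_divide ex en by (simp add: field_simps power_mult_distrib)
  qed
  also have "\<dots> \<le> (\<rho> * K) ^ Suc t * exp x * exp (x + 1) * (x / n) ^ Suc (Suc t)"
    using e1 e2 r0 K0 x0 n0 by (intro mult_right_mono mult_mono) auto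
  also have "\<dots> \<le> c ^ Suc t * (x / n) ^ Suc (Suc t)"
  proof -
    have "exp x * exp (x + 1) \<le> exp 2 ^ Suc t"
      using x_def by (simp add: exp_add[symmetric] exp_of_nat_mult[symmetric] algebra_simps)
    then have "(\<rho> * K) ^ Suc t * (exp x * exp (x + 1)) \<le> (\<rho> * K) ^ Suc t * exp 2 ^ Suc t"
      using r0 K0 by (intro mult_left_mono) auto
    then show ?thesis unfolding c_def using x0 n0
      by (intro mult_right_mono) (auto simp: power_mult_distrib ac_simps)
  qed
  also have "\<dots> = (c * x / n) ^ Suc t * (x / n)" by (simp add: power_mult_distrib power_divide ac_simps)
  also have "\<dots> \<le> (c * x / n) ^ Suc t * 1"
  proof -
    have "x \<le> \<delta> * n" using tN x_def n_def by simp
    moreover have "\<delta> \<le> 1" using mult_right_mono[OF c1 d0] cd by simp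
    then have "\<delta> * n \<le> 1 * n" using n0 by (intro mult_right_mono) auto
    ultimately have "x \<le> n" by simp
    then have "x / n \<le> 1" using n0 by simp
    then show ?thesis using c1 x0 n0 by (intro mult_left_mono) auto
  qed
  also have "\<dots> = (c * x / n) ^ 2 * (c * x / n) ^ (t - 1)"
    using t1 by (simp flip: power_add)
  also have "\<dots> \<le> (c * x / n) ^ 2 * (1/8) ^ (t - 1)"
  proof -
    have "c * x / n \<le> 1/8"
    proof -
      have "c * x \<le> c * (\<delta> * n)" using tN x_def n_def c1 by (intro mult_left_mono) auto
      also have "\<dots> = (c * \<delta>) * n" by simp
      also have "\<dots> \<le> (1/8) * n" using cd n0 by (intro mult_right_mono) auto
      finally show ?thesis using n0 by (simp add: field_simps)
    qed
    then show ?thesis using c1 x0 n0 by (intro mult_left_mono power_mono) auto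
  qed
  also have "\<dots> = 8 * c ^ 2 / n ^ 2 * (x ^ 2 * (1/8) ^ t)"
    using t1 n0 by (cases t) (auto simp: field_simps power_mult_distrib power_divide)
  also have "\<dots> \<le> 8 * c ^ 2 / n ^ 2 * (1/2) ^ t"
  proof -
    have "x ^ 2 * (1/8) ^ t \<le> 4 ^ t * (1/8) ^ t" using sq_le_4pow[of t] x_def by (intro mult_right_mono) auto
    also have "\<dots> = (1/2) ^ t" by (simp add: power_mult_distrib[symmetric])
    finally show ?thesis using n0 by (intro mult_left_mono) auto
  qed
  finally show ?thesis unfolding x_def n_def by simp
qed

lemma geom_half: "(\<Sum>t\<in>{1..n}. (1/2::real) ^ t) \<le> 1"
proof -
  have "(\<Sum>t\<in>{1..n}. (1/2::real) ^ t) = 1 - (1/2) ^ n"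
    by (induction n) (auto simp: atLeastAtMostSuc_conv)
  then show ?thesis by simp
qed
definition XS :: "nat \<Rightarrow> nat \<Rightarrow> lit set \<Rightarrow> cnf \<Rightarrow> nat" where
  "XS k M S \<Phi> = card {p\<in>Pos k M. \<Phi> p \<in> S}"

lemma mgf:
  assumes "S \<subseteq> lits N"
  shows "(\<Sum>\<Phi>\<in>formulas k N M. exp (u * real (XS k M S \<Phi>))) =
         (real (2 * N) - real (card S) + real (card S) * exp u) ^ (M * k)"
proof -
  define h where "h l = (if l \<in> S then exp u else 1)" for l
  have e: "exp (u * real (XS k M S \<Phi>)) = (\<Prod>p\<in>Pos k M. h (\<Phi> p))" for \<Phi>
  proof -
    have "(\<Prod>p\<in>Pos k M. h (\<Phi> p)) = (\<Prod>p\<in>{p\<in>Pos k M. \<Phi> p \<in> S}. exp u)"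
      unfolding h_def by (rule prod.inter_filter[OF finite_Pos, symmetric])
    also have "\<dots> = exp u ^ XS k M S \<Phi>" unfolding XS_def by simp
    also have "\<dots> = exp (u * real (XS k M S \<Phi>))" by (simp add: exp_of_nat_mult[symmetric] mult.commute)
    finally show ?thesis by simp
  qed
  have "(\<Sum>\<Phi>\<in>formulas k N M. exp (u * real (XS k M S \<Phi>))) = (\<Sum>\<Phi>\<in>PiE (Pos k M) (\<lambda>_. lits N). \<Prod>p\<in>Pos k M. h (\<Phi> p))"
    unfolding formulas_Pos e ..
  also have "\<dots> = (\<Prod>p\<in>Pos k M. \<Sum>l\<in>lits N. h l)"
    by (rule prod_sum_PiE[symmetric]) (auto simp: finite_Pos finite_lits)
  also have "\<dots> = (\<Sum>l\<in>lits N. h l) ^ (M * k)" by (simp add: card_Pos)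
  also have "(\<Sum>l\<in>lits N. h l) = real (card S) * exp u + real (card (lits N - S))"
    unfolding h_def using assms by (simp add: sum.If_cases finite_lits Int_absorb1 Diff_eq)
  also have "real (card (lits N - S)) = real (2 * N) - real (card S)"
  proof -
    have "card S \<le> 2 * N" using card_mono[OF finite_lits assms] card_lits by metis
    moreover have "card (lits N - S) = 2 * N - card S"
      using assms by (simp add: card_Diff_subset finite_lits card_lits finite_subset)
    ultimately show ?thesis by (simp add: of_nat_diff)
  qed
  finally show ?thesis by (simp add: algebra_simps)
qed

lemma tail_up:
  assumes "u \<ge> 0"
  shows "real (card {\<Phi>\<in>formulas k N M. a \<le> real (XS k M S \<Phi>)}) * exp (u * a) \<le>
         (\<Sum>\<Phi>\<in>formulas k N M. exp (u * real (XS k M S \<Phi>)))"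
proof -
  let ?E = "{\<Phi>\<in>formulas k N M. a \<le> real (XS k M S \<Phi>)}"
  have "real (card ?E) * exp (u * a) = (\<Sum>\<Phi>\<in>?E. exp (u * a))" by simp
  also have "\<dots> \<le> (\<Sum>\<Phi>\<in>?E. exp (u * real (XS k M S \<Phi>)))"
    using assms by (intro sum_mono) (auto intro: mult_left_mono)
  also have "\<dots> \<le> (\<Sum>\<Phi>\<in>formulas k N M. exp (u * real (XS k M S \<Phi>)))"
    by (intro sum_mono2 finite_formulas) auto
  finally show ?thesis .
qed

lemma tail_down:
  assumes "u \<le> 0"
  shows "real (card {\<Phi>\<in>formulas k N M. real (XS k M S \<Phi>) \<le> a}) * exp (u * a) \<le>
         (\<Sum>\<Phi>\<in>formulas k N M. exp (u * real (XS k M S \<Phi>)))"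
proof -
  let ?E = "{\<Phi>\<in>formulas k N M. real (XS k M S \<Phi>) \<le> a}"
  have "real (card ?E) * exp (u * a) = (\<Sum>\<Phi>\<in>?E. exp (u * a))" by simp
  also have "\<dots> \<le> (\<Sum>\<Phi>\<in>?E. exp (u * real (XS k M S \<Phi>)))"
    using assms by (intro sum_mono) (auto intro: mult_left_mono_neg)
  also have "\<dots> \<le> (\<Sum>\<Phi>\<in>formulas k N M. exp (u * real (XS k M S \<Phi>)))"
    by (intro sum_mono2 finite_formulas) auto
  finally show ?thesis .
qed

lemma mgf_bound:
  assumes "S \<subseteq> lits N" "N > 0"
  shows "(\<Sum>\<Phi>\<in>formulas k N M. exp (u * real (XS k M S \<Phi>))) / real (card (formulas k N M))
     \<le> exp (real (M * k) * (real (card S) / (2 * real N)) * (exp u - 1))"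
proof -
  define q where "q = real (card S) / (2 * real N)"
  have cS: "card S \<le> 2 * N" using card_mono[OF finite_lits assms(1)] card_lits by metis
  have q0: "q \<ge> 0" and q1: "q \<le> 1" using cS assms(2) unfolding q_def by (auto simp: field_simps)
  have base: "(real (2 * N) - real (card S) + real (card S) * exp u) = (2 * real N) * (1 + q * (exp u - 1))"
    unfolding q_def using assms(2) by (simp add: field_simps)
  have b0: "1 + q * (exp u - 1) \<ge> 0"
  proof -
    have "q * (exp u - 1) \<ge> q * (-1)" using q0 by (intro mult_left_mono) auto
    then show ?thesis using q1 by linarith
  qed
  have "(\<Sum>\<Phi>\<in>formulas k N M. exp (u * real (XS k M S \<Phi>))) / real (card (formulas k N M))
      = (1 + q * (exp u - 1)) ^ (M * k)"
    unfolding mgf[OF assms(1)] base card_formulas using assms(2) by (simp add: power_mult_distrib)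
  also have "\<dots> \<le> exp (q * (exp u - 1)) ^ (M * k)"
    by (rule power_mono[OF _ b0]) (use exp_ge_add_one_self[of "q * (exp u - 1)"] in simp)
  also have "\<dots> = exp (real (M * k) * (q * (exp u - 1)))" by (simp add: exp_of_nat_mult[symmetric])
  finally show ?thesis unfolding q_def by (simp add: ac_simps)
qed

lemma chern_up:
  assumes "S \<subseteq> lits N" "N > 0" "0 < \<beta>" "\<beta> \<le> 1" "a \<ge> 0"
  shows "real (card {\<Phi>\<in>formulas k N M. a \<le> real (XS k M S \<Phi>)}) / real (card (formulas k N M))
     \<le> exp (real (M * k) * (real (card S) / (2 * real N)) * \<beta> - a * (\<beta> - \<beta>^2))"
proof -
  define u where "u = ln (1 + \<beta>)"
  define \<mu> where "\<mu> = real (M * k) * (real (card S) / (2 * real N))"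
  have u0: "u \<ge> 0" unfolding u_def using assms(3) by simp
  have eu: "exp u - 1 = \<beta>" unfolding u_def using assms(3) by simp
  have ul: "\<beta> - \<beta>^2 \<le> u" unfolding u_def using ln_one_plus_pos_lower_bound[of \<beta>] assms(3,4) by simp
  define Z where "Z = (\<Sum>\<Phi>\<in>formulas k N M. exp (u * real (XS k M S \<Phi>)))"
  define cF where "cF = real (card (formulas k N M))"
  have cF0: "cF > 0" unfolding cF_def card_formulas using assms(2) by simp
  have "Z / cF \<le> exp (\<mu> * \<beta>)" using mgf_bound[OF assms(1,2), where u=u and k=k and M=M] unfolding Z_def cF_def \<mu>_def eu .
  then have Z: "Z \<le> cF * exp (\<mu> * \<beta>)" using cF0 by (simp add: field_simps)
  have "real (card {\<Phi>\<in>formulas k N M. a \<le> real (XS k M S \<Phi>)}) * exp (u * a) \<le> Z"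
    unfolding Z_def by (rule tail_up[OF u0])
  then have "real (card {\<Phi>\<in>formulas k N M. a \<le> real (XS k M S \<Phi>)}) \<le> cF * exp (\<mu> * \<beta>) / exp (u * a)"
    using Z by (simp add: field_simps)
  also have "\<dots> = cF * exp (\<mu> * \<beta> - u * a)" by (simp add: exp_diff)
  also have "\<dots> \<le> cF * exp (\<mu> * \<beta> - a * (\<beta> - \<beta>^2))"
  proof -
    have "(\<beta> - \<beta>^2) * a \<le> u * a" using ul assms(5) by (intro mult_right_mono) auto
    then show ?thesis using cF0 by (intro mult_left_mono) (auto simp: mult.commute)
  qed
  finally show ?thesis using cF0 unfolding cF_def \<mu>_def by (simp add: field_simps)
qed

lemma chern_down:
  assumes "S \<subseteq> lits N" "N > 0" "0 < \<beta>" "\<beta> \<le> 1/2" "a \<ge> 0"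
  shows "real (card {\<Phi>\<in>formulas k N M. real (XS k M S \<Phi>) \<le> a}) / real (card (formulas k N M))
     \<le> exp (- (real (M * k) * (real (card S) / (2 * real N)) * \<beta>) + a * (\<beta> + 2 * \<beta>^2))"
proof -
  define u where "u = ln (1 - \<beta>)"
  define \<mu> where "\<mu> = real (M * k) * (real (card S) / (2 * real N))"
  have u0: "u \<le> 0" unfolding u_def using assms(3,4) by simp
  have eu: "exp u - 1 = - \<beta>" unfolding u_def using assms(3,4) by simp
  have ul: "- \<beta> - 2 * \<beta>^2 \<le> u" unfolding u_def using ln_one_minus_pos_lower_bound[of \<beta>] assms(3,4) by simp
  define Z where "Z = (\<Sum>\<Phi>\<in>formulas k N M. exp (u * real (XS k M S \<Phi>)))"
  define cF where "cF = real (card (formulas k N M))"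
  have cF0: "cF > 0" unfolding cF_def card_formulas using assms(2) by simp
  have "Z / cF \<le> exp (\<mu> * (- \<beta>))" using mgf_bound[OF assms(1,2), where u=u and k=k and M=M] unfolding Z_def cF_def \<mu>_def eu .
  then have Z: "Z \<le> cF * exp (- (\<mu> * \<beta>))" using cF0 by (simp add: field_simps)
  have "real (card {\<Phi>\<in>formulas k N M. real (XS k M S \<Phi>) \<le> a}) * exp (u * a) \<le> Z"
    unfolding Z_def by (rule tail_down[OF u0])
  then have "real (card {\<Phi>\<in>formulas k N M. real (XS k M S \<Phi>) \<le> a}) \<le> cF * exp (- (\<mu> * \<beta>)) / exp (u * a)"
    using Z by (simp add: field_simps)
  also have "\<dots> = cF * exp (- (\<mu> * \<beta>) - u * a)" by (simp add: exp_diff)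
  also have "\<dots> \<le> cF * exp (- (\<mu> * \<beta>) + a * (\<beta> + 2 * \<beta>^2))"
  proof -
    have "- u * a \<le> (\<beta> + 2 * \<beta>^2) * a" using ul assms(5) by (intro mult_right_mono) auto
    then show ?thesis using cF0 by (intro mult_left_mono) (auto simp: mult.commute)
  qed
  finally show ?thesis using cF0 unfolding cF_def \<mu>_def by (simp add: field_simps)
qed



lemma XS_sum_degree:
  assumes "finite S"
  shows "real (XS k M S \<Phi>) = (\<Sum>l\<in>S. real (degree k \<Phi> {..<M} l))"
proof -
  have d: "degree k \<Phi> {..<M} l = card {p\<in>Pos k M. \<Phi> p = l}" for l
    unfolding degree_def Pos_def by (rule arg_cong[where f=card]) auto
  have "{p\<in>Pos k M. \<Phi> p \<in> S} = (\<Union>l\<in>S. {p\<in>Pos k M. \<Phi> p = l})" by auto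
  then have "XS k M S \<Phi> = card (\<Union>l\<in>S. {p\<in>Pos k M. \<Phi> p = l})" unfolding XS_def by simp
  also have "\<dots> = (\<Sum>l\<in>S. card {p\<in>Pos k M. \<Phi> p = l})"
    by (rule card_UN_disjoint) (auto simp: assms finite_Pos)
  finally show ?thesis by (simp add: d)
qed

definition Bset :: "nat \<Rightarrow> nat \<Rightarrow> nat \<Rightarrow> real \<Rightarrow> nat \<Rightarrow> lit set \<Rightarrow> cnf set" where
  "Bset k N M r s S = {\<Phi>\<in>formulas k N M. real s * (real k * r / 2 + tau k / 2) \<le> real (XS k M S \<Phi>)} \<union>
                      {\<Phi>\<in>formulas k N M. real (XS k M S \<Phi>) \<le> real s * (real k * r / 2 - tau k / 2)}"

lemma badB_subset:
  assumes "s = nat \<lceil>\<delta> * real N / 4\<rceil>"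
  shows "{\<Phi>\<in>formulas k N M. 2 * real (card (halfdev k r N M \<Phi>)) > \<delta> * real N} \<subseteq>
         (\<Union>S\<in>{S. S \<subseteq> lits N \<and> card S = s}. Bset k N M r s S)"
proof
  fix \<Phi> assume \<Phi>: "\<Phi> \<in> {\<Phi>\<in>formulas k N M. 2 * real (card (halfdev k r N M \<Phi>)) > \<delta> * real N}"
  define m where "m = real k * r / 2"
  define d where "d l = real (degree k \<Phi> {..<M} l)" for l
  define Lup where "Lup = {l\<in>lits N. d l > m + tau k / 2}"
  define Ldn where "Ldn = {l\<in>lits N. d l < m - tau k / 2}"
  have fL: "finite Lup" "finite Ldn" unfolding Lup_def Ldn_def using finite_lits by auto
  have Hsub: "halfdev k r N M \<Phi> \<subseteq> fst ` Lup \<union> fst ` Ldn"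
  proof
    fix x assume x: "x \<in> halfdev k r N M \<Phi>"
    then have xN: "x < N" unfolding halfdev_def by auto
    have "max \<bar>d (x, True) - m\<bar> \<bar>d (x, False) - m\<bar> > tau k / 2"
      using x unfolding halfdev_def d_def m_def by auto
    then obtain b where b: "\<bar>d (x, b) - m\<bar> > tau k / 2" by (metis max_def)
    have "(x, b) \<in> lits N" using xN unfolding lits_def by auto
    moreover have "d (x, b) > m + tau k / 2 \<or> d (x, b) < m - tau k / 2" using b by (auto simp: abs_if split: if_splits)
    ultimately have "(x, b) \<in> Lup \<or> (x, b) \<in> Ldn" unfolding Lup_def Ldn_def by auto
    then show "x \<in> fst ` Lup \<union> fst ` Ldn" by (metis UnI1 UnI2 fst_conv image_eqI)
  qed
  have "card (halfdev k r N M \<Phi>) \<le> card (fst ` Lup \<union> fst ` Ldn)"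
    using Hsub fL by (intro card_mono) auto
  also have "\<dots> \<le> card (fst ` Lup) + card (fst ` Ldn)" by (rule card_Un_le)
  also have "\<dots> \<le> card Lup + card Ldn" using card_image_le fL by (metis add_mono)
  finally have cH: "real (card (halfdev k r N M \<Phi>)) \<le> real (card Lup) + real (card Ldn)"
    by (metis of_nat_add of_nat_le_iff)
  have big: "\<delta> * real N < 2 * (real (card Lup) + real (card Ldn))" using \<Phi> cH by auto
  have sle: "real (card L) > \<delta> * real N / 4 \<Longrightarrow> s \<le> card L" for L :: "lit set"
    using assms by (simp add: nat_le_iff ceiling_le_iff)
  show "\<Phi> \<in> (\<Union>S\<in>{S. S \<subseteq> lits N \<and> card S = s}. Bset k N M r s S)"
  proof (cases "real (card Lup) > \<delta> * real N / 4")
    case True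
    obtain S where S: "S \<subseteq> Lup" "card S = s" using obtain_subset_with_card_n[OF sle[OF True]] by blast
    have fS: "finite S" using S(1) fL(1) finite_subset by auto
    have "real s * (m + tau k / 2) = (\<Sum>l\<in>S. m + tau k / 2)" using S(2) by simp
    also have "\<dots> \<le> (\<Sum>l\<in>S. d l)" using S(1) unfolding Lup_def by (intro sum_mono) auto
    also have "\<dots> = real (XS k M S \<Phi>)" unfolding d_def by (rule XS_sum_degree[OF fS, symmetric])
    finally have "\<Phi> \<in> Bset k N M r s S" using \<Phi> unfolding Bset_def m_def by auto
    moreover have "S \<in> {S. S \<subseteq> lits N \<and> card S = s}" using S unfolding Lup_def by auto
    ultimately show ?thesis by blast
  next
    case False
    then have True: "real (card Ldn) > \<delta> * real N / 4" using big by argo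
    obtain S where S: "S \<subseteq> Ldn" "card S = s" using obtain_subset_with_card_n[OF sle[OF True]] by blast
    have fS: "finite S" using S(1) fL(2) finite_subset by auto
    have "real (XS k M S \<Phi>) = (\<Sum>l\<in>S. d l)" unfolding d_def by (rule XS_sum_degree[OF fS])
    also have "\<dots> \<le> (\<Sum>l\<in>S. m - tau k / 2)" using S(1) unfolding Ldn_def by (intro sum_mono) auto
    also have "\<dots> = real s * (m - tau k / 2)" using S(2) by simp
    finally have "\<Phi> \<in> Bset k N M r s S" using \<Phi> unfolding Bset_def m_def by auto
    moreover have "S \<in> {S. S \<subseteq> lits N \<and> card S = s}" using S unfolding Ldn_def by auto
    ultimately show ?thesis by blast
  qed
qed


lemma probB_card:
  assumes N0: "N > 0" and sdef: "s = nat \<lceil>\<delta> * real N / 4\<rceil>"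
    and b1: "0 < \<beta>1" "\<beta>1 \<le> 1" and b2: "0 < \<beta>2" "\<beta>2 \<le> 1/2"
    and a1: "real s * (real k * r / 2 + tau k / 2) \<ge> 0" and a2: "real s * (real k * r / 2 - tau k / 2) \<ge> 0"
  shows "real (card {\<Phi>\<in>formulas k N M. 2 * real (card (halfdev k r N M \<Phi>)) > \<delta> * real N})
    \<le> real (card (formulas k N M)) * real ((2 * N) choose s) *
       (exp (real (M * k) * (real s / (2 * real N)) * \<beta>1 - real s * (real k * r / 2 + tau k / 2) * (\<beta>1 - \<beta>1^2))
      + exp (- (real (M * k) * (real s / (2 * real N)) * \<beta>2) + real s * (real k * r / 2 - tau k / 2) * (\<beta>2 + 2 * \<beta>2^2)))"
proof -
  define Ss where "Ss = {S. S \<subseteq> lits N \<and> card S = s}"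
  define cF where "cF = real (card (formulas k N M))"
  define E where "E = exp (real (M * k) * (real s / (2 * real N)) * \<beta>1 - real s * (real k * r / 2 + tau k / 2) * (\<beta>1 - \<beta>1^2))
      + exp (- (real (M * k) * (real s / (2 * real N)) * \<beta>2) + real s * (real k * r / 2 - tau k / 2) * (\<beta>2 + 2 * \<beta>2^2))"
  have cF0: "cF > 0" unfolding cF_def card_formulas using N0 by simp
  have fSs: "finite Ss" unfolding Ss_def by (rule finite_subset[of _ "Pow (lits N)"]) (auto simp: finite_lits)
  have cSs: "card Ss = (2 * N) choose s" unfolding Ss_def using n_subsets[OF finite_lits, of N s] card_lits by simp
  have each: "real (card (Bset k N M r s S)) \<le> cF * E" if S: "S \<in> Ss" for S
  proof -
    have SL: "S \<subseteq> lits N" and cS: "card S = s" using S unfolding Ss_def by auto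
    define A1 where "A1 = {\<Phi>\<in>formulas k N M. real s * (real k * r / 2 + tau k / 2) \<le> real (XS k M S \<Phi>)}"
    define A2 where "A2 = {\<Phi>\<in>formulas k N M. real (XS k M S \<Phi>) \<le> real s * (real k * r / 2 - tau k / 2)}"
    define e1 where "e1 = exp (real (M * k) * (real s / (2 * real N)) * \<beta>1 - real s * (real k * r / 2 + tau k / 2) * (\<beta>1 - \<beta>1^2))"
    define e2 where "e2 = exp (- (real (M * k) * (real s / (2 * real N)) * \<beta>2) + real s * (real k * r / 2 - tau k / 2) * (\<beta>2 + 2 * \<beta>2^2))"
    have u: "real (card A1) / cF \<le> e1"
      using chern_up[OF SL N0 b1 a1, of k M] cS unfolding cF_def A1_def e1_def by simp
    have d: "real (card A2) / cF \<le> e2"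
      using chern_down[OF SL N0 b2 a2, of k M] cS unfolding cF_def A2_def e2_def by simp
    have u': "real (card A1) \<le> cF * e1" using u cF0 by (simp add: divide_le_eq mult.commute)
    have d': "real (card A2) \<le> cF * e2" using d cF0 by (simp add: divide_le_eq mult.commute)
    have "card (Bset k N M r s S) \<le> card A1 + card A2" unfolding Bset_def A1_def A2_def by (rule card_Un_le)
    then have "real (card (Bset k N M r s S)) \<le> real (card A1) + real (card A2)" by (metis of_nat_add of_nat_le_iff)
    also have "\<dots> \<le> cF * e1 + cF * e2" using u' d' by linarith
    also have "\<dots> = cF * E" unfolding E_def e1_def e2_def by (simp add: distrib_left)
    finally show ?thesis .
  qed
  have "real (card {\<Phi>\<in>formulas k N M. 2 * real (card (halfdev k r N M \<Phi>)) > \<delta> * real N})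
        \<le> real (card (\<Union>S\<in>Ss. Bset k N M r s S))"
    using badB_subset[OF sdef, of k M r] unfolding Ss_def
    by (intro of_nat_mono card_mono) (auto simp: Bset_def finite_formulas intro: finite_subset[OF _ finite_formulas])
  also have "\<dots> \<le> (\<Sum>S\<in>Ss. real (card (Bset k N M r s S)))" by (rule card_UN_real[OF fSs])
  also have "\<dots> \<le> (\<Sum>S\<in>Ss. cF * E)" by (intro sum_mono each)
  also have "\<dots> = cF * real ((2 * N) choose s) * E" using cSs by simp
  finally show ?thesis unfolding cF_def E_def .
qed


lemma expo_up:
  fixes K r t n M s :: real
  assumes n1: "n \<ge> 1" and K1: "K \<ge> 1" and r0: "r > 0" and t2: "2 * K \<le> t" and tr: "t \<le> K * r"
    and Mu: "M \<le> r * n + 1" and s0: "s \<ge> 0"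
  defines "A \<equiv> K * r / 2 + t / 2"
  defines "\<beta> \<equiv> (t - K) / (4 * A)"
  shows "M * K * (s / (2 * n)) * \<beta> - s * A * (\<beta> - \<beta>^2) \<le> - (s * t^2 / (64 * K * r))"
    and "0 < \<beta>" "\<beta> \<le> 1"
proof -
  have A0: "A > 0" unfolding A_def using K1 r0 t2 by (simp add: add_pos_pos)
  have AKr: "A \<le> K * r" unfolding A_def using tr by simp
  have tk: "t - K \<ge> t / 2" using t2 by simp
  have tK0: "t - K > 0" using t2 K1 by simp
  show b0: "0 < \<beta>" unfolding \<beta>_def using A0 tK0 by simp
  show "\<beta> \<le> 1" unfolding \<beta>_def using A0 tK0 unfolding A_def using K1 r0 t2 tr by (simp add: field_simps)
  have \<mu>: "M * K * (s / (2 * n)) \<le> s * (K * r / 2 + K / 2)"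
  proof -
    have "M * K * (s / (2 * n)) = (M * K * s) / (2 * n)" by simp
    also have "\<dots> \<le> ((r * n + 1) * K * s) / (2 * n)"
      using Mu K1 s0 n1 by (intro divide_right_mono mult_right_mono) auto
    also have "\<dots> = s * (K * r / 2) + s * K / (2 * n)" using n1 by (simp add: field_simps)
    also have "\<dots> \<le> s * (K * r / 2) + s * K / 2"
    proof -
      have "s * K / (2 * n) \<le> s * K / 2" using n1 s0 K1 by (intro divide_left_mono) auto
      then show ?thesis by simp
    qed
    finally show ?thesis by (simp add: algebra_simps)
  qed
  have "M * K * (s / (2 * n)) * \<beta> - s * A * (\<beta> - \<beta>^2) \<le> s * (K * r / 2 + K / 2) * \<beta> - s * A * (\<beta> - \<beta>^2)"
    using \<mu> b0 by (intro diff_right_mono mult_right_mono) auto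
  also have "\<dots> = s * (- (t - K) / 2 * \<beta> + A * \<beta>^2)" unfolding A_def by (simp add: field_simps power2_eq_square)
  also have "\<dots> = s * (- ((t - K)^2) / (16 * A))"
    unfolding \<beta>_def using A0 by (simp add: field_simps power2_eq_square)
  also have "\<dots> \<le> s * (- (t^2 / (64 * K * r)))"
  proof -
    have "t^2 / (64 * K * r) = (t / 2)^2 / (16 * (K * r))" by (simp add: power2_eq_square field_simps)
    also have "\<dots> \<le> (t - K)^2 / (16 * (K * r))"
      using tk t2 K1 r0 by (intro divide_right_mono power_mono) auto
    also have "\<dots> \<le> (t - K)^2 / (16 * A)"
      using AKr A0 by (intro divide_left_mono) auto
    finally show ?thesis using s0 by (intro mult_left_mono) auto
  qed
  finally show "M * K * (s / (2 * n)) * \<beta> - s * A * (\<beta> - \<beta>^2) \<le> - (s * t^2 / (64 * K * r))" by simp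
qed

lemma expo_down:
  fixes K r t n M s :: real
  assumes n1: "n \<ge> 1" and K1: "K \<ge> 1" and r0: "r > 0" and t0: "t > 0" and tr: "t \<le> K * r"
    and Ml: "r * n \<le> M" and s0: "s \<ge> 0"
  defines "m \<equiv> K * r / 2"
  defines "\<beta> \<equiv> t / (8 * m)"
  shows "- (M * K * (s / (2 * n)) * \<beta>) + s * (m - t / 2) * (\<beta> + 2 * \<beta>^2) \<le> - (s * t^2 / (64 * K * r))"
    and "0 < \<beta>" "\<beta> \<le> 1/2"
proof -
  have m0: "m > 0" unfolding m_def using K1 r0 by simp
  show b0: "0 < \<beta>" unfolding \<beta>_def using m0 t0 by simp
  have "K * r \<ge> 0" using K1 r0 by simp
  then have "t \<le> 4 * m" unfolding m_def using tr by linarith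
  then show "\<beta> \<le> 1/2" unfolding \<beta>_def using m0 by (simp add: field_simps)
  have \<mu>: "s * m \<le> M * K * (s / (2 * n))"
  proof -
    have "s * m = (r * n) * K * s / (2 * n)" unfolding m_def using n1 by (simp add: field_simps)
    also have "\<dots> \<le> M * K * s / (2 * n)" using Ml K1 s0 n1 by (intro divide_right_mono mult_right_mono) auto
    finally show ?thesis by simp
  qed
  have mt: "m - t / 2 \<ge> 0" unfolding m_def using tr by simp
  have "- (M * K * (s / (2 * n)) * \<beta>) + s * (m - t / 2) * (\<beta> + 2 * \<beta>^2)
        \<le> - (s * m * \<beta>) + s * (m - t / 2) * (\<beta> + 2 * \<beta>^2)"
  proof -
    have "s * m * \<beta> \<le> M * K * (s / (2 * n)) * \<beta>" using \<mu> b0 by (intro mult_right_mono) auto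
    then show ?thesis by linarith
  qed
  also have "\<dots> \<le> - (s * m * \<beta>) + s * (m - t / 2) * \<beta> + s * m * (2 * \<beta>^2)"
  proof -
    have "s * (m - t / 2) * (2 * \<beta>^2) \<le> s * m * (2 * \<beta>^2)" using s0 t0 by (intro mult_right_mono mult_left_mono) auto
    then show ?thesis by (simp add: algebra_simps)
  qed
  also have "\<dots> = s * (- (t^2 / (32 * m)))" unfolding \<beta>_def using m0 by (simp add: field_simps power2_eq_square)
  also have "\<dots> \<le> s * (- (t^2 / (64 * K * r)))"
  proof -
    have "t^2 / (64 * K * r) \<le> t^2 / (32 * m)" unfolding m_def using K1 r0 by (simp add: field_simps)
    then show ?thesis using s0 by (intro mult_left_mono) auto
  qed
  finally show "- (M * K * (s / (2 * n)) * \<beta>) + s * (m - t / 2) * (\<beta> + 2 * \<beta>^2) \<le> - (s * t^2 / (64 * K * r))" by simp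
qed


lemma choose_bound:
  fixes \<delta> :: real
  assumes s1: "s \<ge> 1" and sd: "real s \<ge> \<delta> * real N / 4" and d0: "\<delta> > 0"
  shows "real ((2 * N) choose s) \<le> (8 * exp 1 / \<delta>) ^ s"
proof -
  have sp: "real s > 0" using s1 by simp
  have "real ((2 * N) choose s) \<le> real (2 * N) ^ s / fact s" by (rule choose_le_real)
  also have "\<dots> \<le> real (2 * N) ^ s * (exp 1 ^ s / real s ^ s)"
  proof -
    have "real s ^ s / fact s \<le> exp (real s)" by (rule pow_fact_le_exp) simp
    then have "1 / fact s \<le> exp 1 ^ s / real s ^ s" using sp
      by (simp add: field_simps exp_of_nat_mult[symmetric] mult.commute)
    then show ?thesis by (metis mult_left_mono times_divide_eq_right mult.right_neutral zero_le_power of_nat_0_le_iff)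
  qed
  also have "\<dots> = (real (2 * N) * exp 1 / real s) ^ s" by (simp add: power_mult_distrib power_divide)
  also have "\<dots> \<le> (8 * exp 1 / \<delta>) ^ s"
  proof (rule power_mono)
    have "real (2 * N) * \<delta> \<le> 8 * real s" using sd by simp
    then show "real (2 * N) * exp 1 / real s \<le> 8 * exp 1 / \<delta>" using sp d0
      by (simp add: field_simps)
  qed simp
  finally show ?thesis .
qed

lemma perN:
  fixes k N :: nat and r :: real
  defines "Kc \<equiv> real (k choose 3)"
  defines "c \<equiv> exp 2 * (2 * r) * Kc"
  defines "\<delta> \<equiv> 1 / (8 * c)"
  defines "M \<equiv> nat \<lceil>r * real N\<rceil>"
  assumes k3: "k \<ge> 3" and r1: "r \<ge> 1" and t4: "4 * real k \<le> tau k" and tr: "tau k \<le> real k * r"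
    and gam: "ln (8 * exp 1 / \<delta>) + 1 \<le> tau k ^ 2 / (64 * real k * r)"
    and N1: "N \<ge> 1"
  shows "measure_pmf.prob (random_formula k N M) {\<Phi>. extension_property k r N M \<Phi>}
          \<ge> 1 - 8 * c^2 * inverse (real N ^ 2) - (8 / \<delta>) * inverse (real N)"
proof -
  have N0: "N > 0" using N1 by simp
  have Kc1: "Kc \<ge> 1"
  proof -
    have "0 < k choose 3" using k3 by simp
    then show ?thesis unfolding Kc_def by linarith
  qed
  have c1: "c \<ge> 1"
  proof -
    have "exp 2 \<ge> (1::real)" by simp
    moreover have "1 * 1 \<le> r * Kc" using r1 Kc1 by (intro mult_mono) auto
    then have "2 * r * Kc \<ge> 1" by simp
    ultimately have "exp 2 * (2 * r * Kc) \<ge> 1 * 1" by (intro mult_mono) auto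
    then show ?thesis unfolding c_def by (simp add: mult.assoc)
  qed
  have d0: "\<delta> > 0" unfolding \<delta>_def using c1 by simp
  have cd: "c * \<delta> = 1/8" unfolding \<delta>_def using c1 by simp
  have tp: "tau k > 0" using t4 k3 by linarith
  have Ml: "r * real N \<le> real M" unfolding M_def by linarith
  have rN0: "r * real N \<ge> 0" using r1 by simp
  then have "real M = of_int \<lceil>r * real N\<rceil>" unfolding M_def by simp
  then have Mu: "real M \<le> r * real N + 1" using ceiling_correct[of "r * real N"] by linarith
  have M2: "real M \<le> (2 * r) * real N"
  proof -
    have "1 * 1 \<le> r * real N" using r1 N1 by (intro mult_mono) auto
    then show ?thesis using Mu by linarith
  qed
  define F where "F = formulas k N M"
  define G where "G = {\<Phi>. goodA k N M \<delta> \<Phi>}"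
  define Bad where "Bad = {\<Phi>\<in>formulas k N M. 2 * real (card (halfdev k r N M \<Phi>)) > \<delta> * real N}"
  define Ext where "Ext = {\<Phi>. extension_property k r N M \<Phi>}"
  define cF where "cF = real (card F)"
  have cF0: "cF > 0" unfolding cF_def F_def card_formulas using N0 by simp
  have partA: "real (card (F - G)) \<le> cF * (8 * c^2 / real N ^ 2)"
  proof -
    have "real (card (F - G)) \<le> cF * (\<Sum>t\<in>{1..nat \<lfloor>\<delta> * real N\<rfloor>}. real (N choose t) * real (M choose Suc t) * real (k choose 3) ^ Suc t *
        (real t / real N) ^ (3 * Suc t))"
      unfolding F_def G_def cF_def by (rule probA_card[OF N0])
    also have "\<dots> \<le> cF * (\<Sum>t\<in>{1..nat \<lfloor>\<delta> * real N\<rfloor>}. 8 * c ^ 2 / real N ^ 2 * (1/2) ^ t)"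
    proof (intro mult_left_mono sum_mono)
      fix t assume t: "t \<in> {1..nat \<lfloor>\<delta> * real N\<rfloor>}"
      have "real t \<le> real (nat \<lfloor>\<delta> * real N\<rfloor>)" using t by simp
      also have "\<dots> \<le> \<delta> * real N" using d0 by (intro of_nat_floor) simp
      finally have tN: "real t \<le> \<delta> * real N" .
      have t1: "t \<ge> 1" using t by simp
      have "real (N choose t) * real (M choose Suc t) * Kc ^ Suc t * (real t / real N) ^ (3 * Suc t)
            \<le> 8 * c ^ 2 / real N ^ 2 * (1/2) ^ t"
      proof (rule termA_bound[OF t1 tN N0 M2])
        show "0 \<le> 2 * r" using r1 by simp
        show "0 \<le> Kc" using Kc1 by simp
        show "c = exp 2 * (2 * r) * Kc" unfolding c_def ..
        show "c * \<delta> \<le> 1 / 8" using cd by simp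
        show "1 \<le> c" by (rule c1)
      qed
      then show "real (N choose t) * real (M choose Suc t) * real (k choose 3) ^ Suc t * (real t / real N) ^ (3 * Suc t)
            \<le> 8 * c ^ 2 / real N ^ 2 * (1/2) ^ t" unfolding Kc_def .
    qed (use cF0 in auto)
    also have "\<dots> = cF * (8 * c ^ 2 / real N ^ 2) * (\<Sum>t\<in>{1..nat \<lfloor>\<delta> * real N\<rfloor>}. (1/2::real) ^ t)"
      by (simp add: sum_distrib_left mult.assoc)
    also have "\<dots> \<le> cF * (8 * c ^ 2 / real N ^ 2) * 1"
      using geom_half cF0 by (intro mult_left_mono) auto
    finally show ?thesis by simp
  qed
  have partB: "real (card Bad) \<le> cF * (8 / (\<delta> * real N))"
  proof -
    define s where "s = nat \<lceil>\<delta> * real N / 4\<rceil>"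
    have dN: "\<delta> * real N / 4 > 0" using d0 N0 by simp
    have sd: "real s \<ge> \<delta> * real N / 4" unfolding s_def by (rule real_nat_ceiling_ge)
    have s1: "s \<ge> 1" using sd dN by (cases s) auto
    define \<gamma> where "\<gamma> = tau k ^ 2 / (64 * real k * r)"
    define \<beta>1 where "\<beta>1 = (tau k - real k) / (4 * (real k * r / 2 + tau k / 2))"
    define \<beta>2 where "\<beta>2 = tau k / (8 * (real k * r / 2))"
    have k1: "real k \<ge> 1" using k3 by simp
    have r0: "r > 0" using r1 by simp
    have t2: "2 * real k \<le> tau k" using t4 by simp
    have N1': "real N \<ge> 1" using N1 by simp
    have s0: "real s \<ge> 0" by simp
    note EU = expo_up[OF N1' k1 r0 t2 tr Mu s0]
    note ED = expo_down[OF N1' k1 r0 tp tr Ml s0]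
    have b1: "0 < \<beta>1" "\<beta>1 \<le> 1" using EU(2,3) unfolding \<beta>1_def by auto
    have b2: "0 < \<beta>2" "\<beta>2 \<le> 1/2" using ED(2,3) unfolding \<beta>2_def by auto
    have a1: "real s * (real k * r / 2 + tau k / 2) \<ge> 0" using r0 tp by simp
    have a2: "real s * (real k * r / 2 - tau k / 2) \<ge> 0" using tr by simp
    define E1 where "E1 = real (M * k) * (real s / (2 * real N)) * \<beta>1 - real s * (real k * r / 2 + tau k / 2) * (\<beta>1 - \<beta>1^2)"
    define E2 where "E2 = - (real (M * k) * (real s / (2 * real N)) * \<beta>2) + real s * (real k * r / 2 - tau k / 2) * (\<beta>2 + 2 * \<beta>2^2)"
    have E1: "E1 \<le> - (real s * \<gamma>)" using EU(1) unfolding E1_def \<beta>1_def \<gamma>_def by simp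
    have E2: "E2 \<le> - (real s * \<gamma>)" using ED(1) unfolding E2_def \<beta>2_def \<gamma>_def by simp
    have "real (card Bad) \<le> cF * real ((2 * N) choose s) * (exp E1 + exp E2)"
      unfolding Bad_def cF_def F_def E1_def E2_def by (rule probB_card[OF N0 s_def b1 b2 a1 a2])
    also have "\<dots> \<le> cF * (8 * exp 1 / \<delta>) ^ s * (2 * exp (- (real s * \<gamma>)))"
    proof (rule mult_mono)
      show "cF * real ((2 * N) choose s) \<le> cF * (8 * exp 1 / \<delta>) ^ s"
        using choose_bound[OF s1 sd d0] cF0 by (intro mult_left_mono) auto
      have "exp E1 \<le> exp (- (real s * \<gamma>))" "exp E2 \<le> exp (- (real s * \<gamma>))" using E1 E2 by auto
      then show "exp E1 + exp E2 \<le> 2 * exp (- (real s * \<gamma>))" by linarith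
    qed (use cF0 d0 in auto)
    also have "\<dots> = cF * 2 * exp (real s * ln (8 * exp 1 / \<delta>) - real s * \<gamma>)"
    proof -
      have "(8 * exp 1 / \<delta>) ^ s = exp (real s * ln (8 * exp 1 / \<delta>))"
      proof -
        have pos: "8 * exp 1 / \<delta> > 0" using d0 by simp
        show ?thesis using exp_of_nat_mult[of s "ln (8 * exp 1 / \<delta>)"] pos by simp
      qed
      then show ?thesis by (simp add: exp_diff exp_minus field_simps)
    qed
    also have "\<dots> \<le> cF * 2 * exp (- real s)"
    proof -
      have "real s * ln (8 * exp 1 / \<delta>) - real s * \<gamma> \<le> real s * (-1)"
      proof -
        have "ln (8 * exp 1 / \<delta>) - \<gamma> \<le> -1" using gam unfolding \<gamma>_def by simp
        then have "real s * (ln (8 * exp 1 / \<delta>) - \<gamma>) \<le> real s * (-1)" by (intro mult_left_mono) auto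
        then show ?thesis by (simp add: algebra_simps)
      qed
      then show ?thesis using cF0 by simp
    qed
    also have "\<dots> \<le> cF * 2 * (1 / real s)"
    proof -
      have "real s \<le> exp (real s)" using exp_ge_add_one_self[of "real s"] by linarith
      then have "exp (- real s) \<le> 1 / real s" using s1 by (simp add: exp_minus field_simps)
      then show ?thesis using cF0 by (intro mult_left_mono) auto
    qed
    also have "\<dots> \<le> cF * (8 / (\<delta> * real N))"
    proof -
      have "2 / real s \<le> 8 / (\<delta> * real N)" using sd dN s1 by (simp add: field_simps)
      then have "cF * (2 / real s) \<le> cF * (8 / (\<delta> * real N))" using cF0 by (intro mult_left_mono) auto
      then show ?thesis by simp
    qed
    finally show ?thesis .
  qed
  have sub: "F \<subseteq> (F \<inter> Ext) \<union> (F - G) \<union> Bad"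
  proof
    fix \<Phi> assume \<Phi>: "\<Phi> \<in> F"
    show "\<Phi> \<in> (F \<inter> Ext) \<union> (F - G) \<union> Bad"
    proof (cases "\<Phi> \<in> G \<and> \<Phi> \<notin> Bad")
      case True
      then have "goodA k N M \<delta> \<Phi>" "2 * real (card (halfdev k r N M \<Phi>)) \<le> \<delta> * real N"
        using \<Phi> unfolding G_def Bad_def F_def by auto
      then have "\<Phi> \<in> Ext" unfolding Ext_def using extension[OF _ _ t4 tp] by blast
      then show ?thesis using \<Phi> by auto
    qed (use \<Phi> in auto)
  qed
  have "card F \<le> card ((F \<inter> Ext) \<union> (F - G) \<union> Bad)"
    by (rule card_mono[OF _ sub]) (auto simp: F_def Bad_def finite_formulas)
  also have "\<dots> \<le> card (F \<inter> Ext) + card (F - G) + card Bad"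
  proof -
    have "card ((F \<inter> Ext) \<union> (F - G) \<union> Bad) \<le> card ((F \<inter> Ext) \<union> (F - G)) + card Bad" by (rule card_Un_le)
    moreover have "card ((F \<inter> Ext) \<union> (F - G)) \<le> card (F \<inter> Ext) + card (F - G)" by (rule card_Un_le)
    ultimately show ?thesis by linarith
  qed
  finally have "cF \<le> real (card (F \<inter> Ext)) + real (card (F - G)) + real (card Bad)"
    unfolding cF_def by (simp only: of_nat_add[symmetric] of_nat_le_iff)
  moreover define X where "X = 8 * c ^ 2 / real N ^ 2"
  moreover define Y where "Y = 8 / (\<delta> * real N)"
  ultimately have "real (card (F \<inter> Ext)) \<ge> cF - cF * X - cF * Y"
    using partA[folded X_def] partB[folded Y_def] by linarith
  also have "cF - cF * X - cF * Y = cF * (1 - X - Y)" by (simp add: algebra_simps)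
  finally have "cF * (1 - X - Y) \<le> real (card (F \<inter> Ext))" .
  then have "1 - X - Y \<le> real (card (F \<inter> Ext)) / cF"
    using cF0 by (simp add: le_divide_eq mult.commute)
  moreover have "measure_pmf.prob (random_formula k N M) Ext = real (card (F \<inter> Ext)) / cF"
    unfolding F_def cF_def by (rule prob_formula[OF N0])
  moreover have "X = 8 * c^2 * inverse (real N ^ 2)" unfolding X_def by (simp add: divide_inverse)
  moreover have "Y = (8 / \<delta>) * inverse (real N)" unfolding Y_def by (simp add: divide_inverse)
  ultimately show ?thesis unfolding Ext_def by simp
qed

lemma mainK:
  fixes k :: nat and r :: real
  defines "Kc \<equiv> real (k choose 3)"
  defines "c \<equiv> exp 2 * (2 * r) * Kc"
  defines "\<delta> \<equiv> 1 / (8 * c)"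
  assumes k3: "k \<ge> 3" and r1: "r \<ge> 1" and t4: "4 * real k \<le> tau k" and tr: "tau k \<le> real k * r"
    and gam: "ln (8 * exp 1 / \<delta>) + 1 \<le> tau k ^ 2 / (64 * real k * r)"
  shows "(\<lambda>N. measure_pmf.prob (random_formula k N (nat \<lceil>r * real N\<rceil>))
            {\<Phi>. extension_property k r N (nat \<lceil>r * real N\<rceil>) \<Phi>}) \<longlonglongrightarrow> 1"
proof (rule tendsto_sandwich)
  define h where "h N = 1 - 8 * c^2 * inverse (real N ^ 2) - (8 / \<delta>) * inverse (real N)" for N :: nat
  show "\<forall>\<^sub>F N in sequentially. h N \<le> measure_pmf.prob (random_formula k N (nat \<lceil>r * real N\<rceil>))
            {\<Phi>. extension_property k r N (nat \<lceil>r * real N\<rceil>) \<Phi>}"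
    using eventually_ge_at_top[of "1::nat"]
  proof eventually_elim
    case (elim N)
    show ?case unfolding h_def c_def \<delta>_def Kc_def
      using perN[OF k3 r1 t4 tr _ elim] gam unfolding c_def \<delta>_def Kc_def by simp
  qed
  show "\<forall>\<^sub>F N in sequentially. measure_pmf.prob (random_formula k N (nat \<lceil>r * real N\<rceil>))
            {\<Phi>. extension_property k r N (nat \<lceil>r * real N\<rceil>) \<Phi>} \<le> 1"
    by (simp add: measure_pmf.prob_le_1)
  have a: "(\<lambda>N::nat. inverse (real N ^ 2)) \<longlonglongrightarrow> 0" by real_asymp
  have b: "(\<lambda>N::nat. inverse (real N)) \<longlonglongrightarrow> 0" by real_asymp
  have "(\<lambda>N. 1 - 8 * c^2 * inverse (real N ^ 2) - (8 / \<delta>) * inverse (real N)) \<longlonglongrightarrow> 1 - 8 * c^2 * 0 - (8 / \<delta>) * 0"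
    by (intro tendsto_intros a b)
  then show "h \<longlonglongrightarrow> 1" unfolding h_def by simp
  show "(\<lambda>N. 1::real) \<longlonglongrightarrow> 1" by simp
qed

lemma kcond:
  fixes k :: nat and r e :: real
  defines "Kc \<equiv> real (k choose 3)"
  defines "c \<equiv> exp 2 * (2 * r) * Kc"
  defines "\<delta> \<equiv> 1 / (8 * c)"
  assumes rdef: "r = 2 ^ k * ln 2 - (1 + ln 2) / 2 - e"
    and e0: "0 < e" and e1: "e \<le> 1" and k20: "k \<ge> 20"
    and kp: "real k ^ 2 \<le> 2 powr (real k / 2) / 2" and k5: "11 + 4 * real k \<le> real k ^ 5 / 64"
  shows "k \<ge> 3" "r \<ge> 1" "4 * real k \<le> tau k" "tau k \<le> real k * r"
    "ln (8 * exp 1 / \<delta>) + 1 \<le> tau k ^ 2 / (64 * real k * r)"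
proof -
  show k3: "k \<ge> 3" using k20 by simp
  have l2: "2/3 \<le> ln (2::real)" by (rule ln2_ge_two_thirds)
  have l2': "ln (2::real) < 1" by (rule ln_2_less_1)
  have p16: "(2::real) ^ k \<ge> 16"
  proof -
    have "(2::real) ^ 4 \<le> 2 ^ k" using k20 by (intro power_increasing) auto
    then show ?thesis by simp
  qed
  have rup: "r \<le> 2 ^ k"
  proof -
    have "2 ^ k * ln 2 \<le> (2::real) ^ k * 1" using l2' by (intro mult_left_mono) auto
    moreover have "(1 + ln 2) / 2 > (0::real)" using l2 by simp
    ultimately show ?thesis using rdef e0 by linarith
  qed
  have rlo: "r \<ge> 2 ^ k / 2"
  proof -
    have "2 ^ k * (2/3) \<le> (2::real) ^ k * ln 2" using l2 by (intro mult_left_mono) auto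
    moreover have "(1 + ln 2) / 2 \<le> (1::real)" using l2' by simp
    ultimately show ?thesis using rdef e1 p16 by linarith
  qed
  show r1: "r \<ge> 1" using rlo p16 by linarith
  define P where "P = 2 powr (real k / 2)"
  have P1: "P \<ge> 1" unfolding P_def by (rule ge_one_powr_ge_zero) auto
  have P2: "P ^ 2 = 2 ^ k"
  proof -
    have "P ^ 2 = 2 powr (real k / 2 * 2)" unfolding P_def by (simp add: powr_powr[symmetric] powr_realpow[symmetric] power2_eq_square powr_add[symmetric])
    also have "\<dots> = 2 ^ k" by (simp add: powr_realpow)
    finally show ?thesis .
  qed
  have tdef: "tau k = real k ^ 3 * P" unfolding tau_def P_def ..
  have k1: "real k \<ge> 20" using k20 by simp
  show "4 * real k \<le> tau k"
  proof -
    have "2 * 2 \<le> real k * real k" using k1 by (intro mult_mono) auto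
    then have "4 * real k \<le> (real k * real k) * real k" using k1 by (intro mult_right_mono) auto
    then have "4 * real k \<le> real k ^ 3" by (simp add: power3_eq_cube)
    also have "\<dots> \<le> real k ^ 3 * P" using mult_left_mono[OF P1, of "real k ^ 3"] by simp
    finally show ?thesis unfolding tdef .
  qed
  show "tau k \<le> real k * r"
  proof -
    have "tau k = real k * (real k ^ 2 * P)" unfolding tdef by (simp add: power3_eq_cube power2_eq_square)
    also have "\<dots> \<le> real k * (P / 2 * P)" using kp P1 unfolding P_def by (intro mult_left_mono mult_right_mono) auto
    also have "\<dots> = real k * (2 ^ k / 2)" using P2 by (simp add: power2_eq_square)
    also have "\<dots> \<le> real k * r" using rlo by (intro mult_left_mono) auto
    finally show ?thesis .
  qed
  have Kc1: "Kc \<ge> 1" unfolding Kc_def using k3 by (simp add: Suc_le_eq)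
  have "real (k choose 3) \<le> real (k ^ 3)" using binomial_le_pow[OF k3] by (simp only: of_nat_le_iff)
  then have Kck: "Kc \<le> real k ^ 3" unfolding Kc_def by simp
  have r0: "r > 0" using r1 by simp
  have c0: "c > 0" unfolding c_def using r0 Kc1 by simp
  have eq: "8 * exp 1 / \<delta> = 2 ^ 7 * exp 3 * r * Kc" unfolding \<delta>_def c_def
    by (simp add: field_simps exp_add[symmetric])
  have "ln (8 * exp 1 / \<delta>) = ln (2 ^ 7) + ln (exp 3) + ln r + ln Kc"
    unfolding eq using r0 Kc1 by (simp add: ln_mult)
  also have "\<dots> \<le> 7 + 3 + real k + 3 * real k"
  proof -
    have "ln ((2::real) ^ 7) = 7 * ln 2" using ln_realpow[of 2 7] by (simp del: ln_realpow)
    then have a: "ln ((2::real) ^ 7) \<le> 7" using l2' by simp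
    have "ln r \<le> ln (2 ^ k)" using r0 rup by simp
    also have "\<dots> = real k * ln 2" by (simp add: ln_realpow)
    also have "\<dots> \<le> real k" using l2' by (simp add: mult_left_le)
    finally have b: "ln r \<le> real k" .
    have "ln Kc \<le> ln (real k ^ 3)" using Kc1 Kck k1 by (subst ln_le_cancel_iff) auto
    also have "\<dots> = 3 * ln (real k)" using k1 by (simp add: ln_realpow)
    also have "\<dots> \<le> 3 * real k" using ln_le_minus_one[of "real k"] k1 by simp
    finally have d: "ln Kc \<le> 3 * real k" .
    show ?thesis using a b d by simp
  qed
  finally have L: "ln (8 * exp 1 / \<delta>) + 1 \<le> 11 + 4 * real k" by simp
  have "real k ^ 5 / 64 \<le> tau k ^ 2 / (64 * real k * r)"
  proof -
    have "tau k ^ 2 = real k ^ 6 * 2 ^ k" unfolding tdef using P2 by (simp add: power_mult_distrib power_mult[symmetric])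
    then have "tau k ^ 2 / (64 * real k * r) = real k ^ 5 * (2 ^ k / r) / 64" using k1
      by (simp add: field_simps power_eq_if)
    also have "\<dots> \<ge> real k ^ 5 * 1 / 64"
    proof -
      have "2 ^ k / r \<ge> 1" using rup r0 by simp
      then show ?thesis by (intro divide_right_mono mult_left_mono) auto
    qed
    finally show ?thesis by simp
  qed
  then show "ln (8 * exp 1 / \<delta>) + 1 \<le> tau k ^ 2 / (64 * real k * r)" using L k5 by linarith
qed

theorem lemmaB6:
  fixes eps :: "nat \<Rightarrow> real"
  assumes "eps \<in> \<Theta>(\<lambda>k. 2 powr (- real k / 3))"
    and "\<forall>\<^sub>F k in at_top. eps k > 0"
  shows "\<forall>\<^sub>F k in at_top.
    (\<lambda>N. let r = clause_density eps k; M = nat \<lceil>r * real N\<rceil> in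
       measure_pmf.prob (random_formula k N M) {\<Phi>. extension_property k r N M \<Phi>})
    \<longlonglongrightarrow> 1"
proof -
  have O: "eps \<in> O(\<lambda>k. 2 powr (- real k / 3))" using assms(1) by (rule bigthetaD1)
  have "(\<lambda>k::nat. 2 powr (- real k / 3)) \<in> o(\<lambda>k. 1)" by real_asymp
  then have "eps \<in> o(\<lambda>k. 1)" using landau_o.big_small_trans[OF O] by blast
  then have "eps \<longlonglongrightarrow> 0" using smalloD_tendsto by fastforce
  then have e1: "\<forall>\<^sub>F k in at_top. eps k < 1" by (rule order_tendstoD) simp
  have k20: "\<forall>\<^sub>F k in at_top. (k::nat) \<ge> 20" by (rule eventually_ge_at_top)
  have kp: "\<forall>\<^sub>F k in at_top. real k ^ 2 \<le> 2 powr (real k / 2) / 2" by real_asymp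
  have k5: "\<forall>\<^sub>F k in at_top. 11 + 4 * real k \<le> real k ^ 5 / 64" by real_asymp
  show ?thesis using assms(2) e1 k20 kp k5
  proof eventually_elim
    case (elim k)
    define r where "r = clause_density eps k"
    have rdef: "r = 2 ^ k * ln 2 - (1 + ln 2) / 2 - eps k" unfolding r_def clause_density_def ..
    note C = kcond[OF rdef elim(1) _ elim(3) elim(4) elim(5)]
    have "(\<lambda>N. measure_pmf.prob (random_formula k N (nat \<lceil>r * real N\<rceil>))
            {\<Phi>. extension_property k r N (nat \<lceil>r * real N\<rceil>) \<Phi>}) \<longlonglongrightarrow> 1"
      by (rule mainK) (use C elim(2) in auto)
    then show ?case unfolding r_def by (simp add: Let_def)
  qed
qed

end
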